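(* Fix $n\in\mathbb Z_{\ge2}$ and $k\in\mathbb Z_{\ge1}$. There exists a constant $C=C(k,n)$ such that for every walk $w=(e_1,\dots,e_j)$, $j\ge1$, in the coloured overlap graph $\mathcal{O}v_c(k,\searrow_n)$, there exist a (possibly empty) walk $w'$ in $\mathcal{O}v_c(k,\searrow_n)$ with $|w'|\le C$ and a permutation $\sigma\in\mathrm{Av}(\searrow_n)$ of size $j+k-1+|w'|$ such that $W^c_k(\sigma)=w'\bullet w$.
   Context: $\searrow_n=n(n-1)\cdots1$. For $I=\{i_1<\dots<i_j\}$, $\mathrm{pat}_I(\sigma)$ is the unique permutation with entries in the same relative order as $\sigma(i_1),\dots,\sigma(i_j)$; $\mathrm{Av}_m(\searrow_n)$ is the set of size-$m$ permutations $\sigma$ with no $I$ such that $\mathrm{pat}_I(\sigma)=\searrow_n$ ($\mathrm{Av}_0$ is the empty permutation), $\mathrm{Av}(\searrow_n)$ their union over $m\ge1$. A colouring of $\sigma\in\mathcal S_m$ is a map $\mathfrak c:[m]\to\mathbb Z_{\ge1}$; restriction $\mathrm{pat}_I(\sigma,\mathfrak c)=(\mathrm{pat}_I(\sigma),\mathfrak c')$ with $\mathfrak c'(\ell)=\mathfrak c(i_\ell)$; $\mathrm{be}_j=\mathrm{pat}_{\{1,\dots,j\}}$, $\mathrm{en}_j=\mathrm{pat}_{\{m-j+1,\dots,m\}}$. The RITMO colouring $\mathbb C(\sigma)$ processes indices in decreasing order of value, giving index $i$ the smallest positive integer $c$ such that no already coloured index $j<i$ has colour $c$ (equivalently: colour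 1 on left-to-right maxima, colour 2 on left-to-right maxima of the remaining entries, etc.); $\mathbb S(\sigma)=(\sigma,\mathbb C(\sigma))$. A coloured permutation $(\pi,\mathfrak c)$ with $\pi\in\mathrm{Av}_k(\searrow_n)$ is inherited if there is $\sigma\in\mathrm{Av}(\searrow_n)$ with $|\sigma|\ge k$ and $\mathrm{en}_k(\mathbb S(\sigma))=(\pi,\mathfrak c)$; $\mathcal C_{n-1}(k)$ is the set of these. The coloured overlap graph $\mathcal{O}v_c(k,\searrow_n)$ has vertex set $\mathcal C_{n-1}(k-1)$, edge set $\mathcal C_{n-1}(k)$, the edge $(\pi,\mathfrak c)$ going from $\mathrm{be}_{k-1}(\pi,\mathfrak c)$ to $\mathrm{en}_{k-1}(\pi,\mathfrak c)$. A walk is a sequence of edges with each arrival vertex equal to the next start vertex; $|w|$ is its number of edges; $w'\bullet w$ is concatenation (defined when the last edge of $w'$ ends where the first edge of $w$ starts, or $w'$ empty). For $\sigma\in\mathrm{Av}_m(\searrow_n)$, $m\ge k$, the coloured walk is $W^c_k(\sigma)=(\mathrm{pat}_{\{1,\dots,k\}}(\mathbb S(\sigma)),\dots,\mathrm{pat}_{\{m-k+1,\dots,m\}}(\mathbb S(\sigma)))$, a walk of size $m-k+1$ in $\mathcal{O}v_c(k,\searrow_n)$. *)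

theory Defs
  imports Main
begin

text \<open>Permutations of size m are lists whose entries are exactly 1..m (positions are 0-based).
A coloured permutation is a pair (permutation, list of colours) of equal length.\<close>

definition is_perm :: "nat list \<Rightarrow> bool" where
  "is_perm \<sigma> \<longleftrightarrow> distinct \<sigma> \<and> set \<sigma> = {1..length \<sigma>}"

definition std :: "nat list \<Rightarrow> nat list" where
  "std xs = map (\<lambda>x. card {y \<in> set xs. y \<le> x}) xs"

definition pat :: "nat set \<Rightarrow> nat list \<Rightarrow> nat list" where
  "pat I \<sigma> = std (nths \<sigma> I)"

definition decr :: "nat \<Rightarrow> nat list" where
  "decr n = rev [1..<n+1]"

definition avoids :: "nat list \<Rightarrow> nat list \<Rightarrow> bool" where
  "avoids \<sigma> \<tau> \<longleftrightarrow> \<not> (\<exists>I \<subseteq> {0..<length \<sigma>}. pat I \<sigma> = \<tau>)"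

definition Av_m :: "nat \<Rightarrow> nat list \<Rightarrow> nat list set" where
  "Av_m m \<tau> = {\<sigma>. is_perm \<sigma> \<and> length \<sigma> = m \<and> avoids \<sigma> \<tau>}"

definition Av :: "nat list \<Rightarrow> nat list set" where
  "Av \<tau> = (\<Union>m\<in>{1..}. Av_m m \<tau>)"

type_synonym cperm = "nat list \<times> nat list"

definition cpat :: "nat set \<Rightarrow> cperm \<Rightarrow> cperm" where
  "cpat I sc = (pat I (fst sc), nths (snd sc) I)"

definition be :: "nat \<Rightarrow> cperm \<Rightarrow> cperm" where
  "be j sc = cpat {0..<j} sc"

definition en :: "nat \<Rightarrow> cperm \<Rightarrow> cperm" where
  "en j sc = cpat {length (fst sc) - j..<length (fst sc)} sc"

text \<open>RITMO colouring: indices processed in decreasing order of value; index i receives the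
smallest positive colour c not carried by an already coloured index j < i
(0 marks a not yet coloured index).\<close>
definition ritmo :: "nat list \<Rightarrow> nat list" where
  "ritmo \<sigma> = fold (\<lambda>i c. c[i := (LEAST c'. 1 \<le> c' \<and> (\<forall>j<i. c ! j \<noteq> c'))])
      (rev (sort_key (\<lambda>i. \<sigma> ! i) [0..<length \<sigma>])) (replicate (length \<sigma>) 0)"

definition S :: "nat list \<Rightarrow> cperm" where
  "S \<sigma> = (\<sigma>, ritmo \<sigma>)"

definition inherited :: "nat \<Rightarrow> nat \<Rightarrow> cperm set" where
  "inherited n k = {pc. fst pc \<in> Av_m k (decr n) \<and>
      (\<exists>\<sigma> \<in> Av (decr n). length \<sigma> \<ge> k \<and> en k (S \<sigma>) = pc)}"

definition ov_vertices :: "nat \<Rightarrow> nat \<Rightarrow> cperm set" where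
  "ov_vertices k n = inherited n (k - 1)"

definition ov_edges :: "nat \<Rightarrow> nat \<Rightarrow> cperm set" where
  "ov_edges k n = inherited n k"

definition src :: "nat \<Rightarrow> cperm \<Rightarrow> cperm" where
  "src k e = be (k - 1) e"

definition tgt :: "nat \<Rightarrow> cperm \<Rightarrow> cperm" where
  "tgt k e = en (k - 1) e"

definition is_walk :: "nat \<Rightarrow> nat \<Rightarrow> cperm list \<Rightarrow> bool" where
  "is_walk k n w \<longleftrightarrow> set w \<subseteq> ov_edges k n \<and>
     (\<forall>i. Suc i < length w \<longrightarrow> tgt k (w ! i) = src k (w ! Suc i))"

definition concat_defined :: "nat \<Rightarrow> cperm list \<Rightarrow> cperm list \<Rightarrow> bool" where
  "concat_defined k w' w \<longleftrightarrow> w' = [] \<or> (w \<noteq> [] \<and> tgt k (last w') = src k (hd w))"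

definition coloured_walk :: "nat \<Rightarrow> nat list \<Rightarrow> cperm list" where
  "coloured_walk k \<sigma> = map (\<lambda>i. cpat {i..<i+k} (S \<sigma>)) [0..<length \<sigma> - k + 1]"

end

theory Submission
  imports Defs
begin


lemma std_length[simp]: "length (std xs) = length xs"
  by (simp add: std_def)

lemma std_nth:
  assumes "distinct xs" "p < length xs"
  shows "std xs ! p = card {q. q < length xs \<and> xs!q \<le> xs!p}"
proof -
  have "{y \<in> set xs. y \<le> xs!p} = (!) xs ` {q. q < length xs \<and> xs!q \<le> xs!p}"
    by (auto simp: in_set_conv_nth)
  moreover have "inj_on ((!) xs) {q. q < length xs \<and> xs!q \<le> xs!p}"
    using assms(1) by (simp add: inj_on_def nth_eq_iff_index_eq)
  ultimately show ?thesis using assms by (simp add: std_def card_image)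
qed

lemma std_less:
  assumes "distinct xs" "p < length xs" "q < length xs"
  shows "(std xs!p < std xs!q) = (xs!p < xs!q)"
proof
  assume h: "xs!p < xs!q"
  have s1: "{r. r < length xs \<and> xs!r \<le> xs!p} \<subseteq> {r. r < length xs \<and> xs!r \<le> xs!q}"
    using h by auto
  have s2: "q \<notin> {r. r < length xs \<and> xs!r \<le> xs!p}" using h by simp
  have s3: "q \<in> {r. r < length xs \<and> xs!r \<le> xs!q}" using assms(3) by simp
  have "{r. r < length xs \<and> xs!r \<le> xs!p} \<subset> {r. r < length xs \<and> xs!r \<le> xs!q}"
    using s1 s2 s3 by blast
  then have "card {r. r < length xs \<and> xs!r \<le> xs!p} < card {r. r < length xs \<and> xs!r \<le> xs!q}"
    by (rule psubset_card_mono[rotated]) simp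
  then show "std xs!p < std xs!q" using assms by (simp add: std_nth)
next
  assume h: "std xs!p < std xs!q"
  show "xs!p < xs!q"
  proof (rule ccontr)
    assume "\<not> xs!p < xs!q"
    then have "{r. r < length xs \<and> xs!r \<le> xs!q} \<subseteq> {r. r < length xs \<and> xs!r \<le> xs!p}"
      by auto
    then have "card {r. r < length xs \<and> xs!r \<le> xs!q} \<le> card {r. r < length xs \<and> xs!r \<le> xs!p}"
      by (rule card_mono[rotated]) simp
    then have "std xs!q \<le> std xs!p" using assms by (simp add: std_nth)
    then show False using h by simp
  qed
qed



lemma distinct_std: assumes "distinct xs" shows "distinct (std xs)"
proof -
  have "\<forall>i<length xs. \<forall>j<length xs. i \<noteq> j \<longrightarrow> std xs ! i \<noteq> std xs ! j"
  proof (intro allI impI)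
    fix i j assume ij: "i < length xs" "j < length xs" "i \<noteq> j"
    then have "xs!i \<noteq> xs!j" using assms by (simp add: nth_eq_iff_index_eq)
    then have "xs!i < xs!j \<or> xs!j < xs!i" by linarith
    then show "std xs ! i \<noteq> std xs ! j"
      using std_less[OF assms ij(1,2)] std_less[OF assms ij(2,1)] by auto
  qed
  then show ?thesis by (simp add: distinct_conv_nth)
qed

lemma std_ordiso:
  assumes "distinct xs" "distinct ys" "length xs = length ys"
    "\<And>p q. p < length xs \<Longrightarrow> q < length xs \<Longrightarrow> (xs!p < xs!q) = (ys!p < ys!q)"
  shows "std xs = std ys"
proof (rule nth_equalityI)
  show "length (std xs) = length (std ys)" using assms by simp
  fix p assume p0: "p < length (std xs)"
  then have p: "p < length xs" by simp
  have eq: "\<And>q. q < length xs \<Longrightarrow> (xs!q \<le> xs!p) = (ys!q \<le> ys!p)"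
  proof -
    fix q assume q: "q < length xs"
    show "(xs!q \<le> xs!p) = (ys!q \<le> ys!p)"
    proof (cases "q = p")
      case False
      then have "xs!q \<noteq> xs!p" using assms(1) p q by (simp add: nth_eq_iff_index_eq)
      moreover have "ys!q \<noteq> ys!p" using False assms(2,3) p q by (simp add: nth_eq_iff_index_eq)
      moreover have "(xs!p < xs!q) = (ys!p < ys!q)" using assms(4)[OF p q] .
      ultimately show ?thesis by (metis le_neq_implies_less less_imp_le not_less)
    qed simp
  qed
  have "{q. q < length xs \<and> xs!q \<le> xs!p} = {q. q < length ys \<and> ys!q \<le> ys!p}"
    using eq assms(3) by (intro Collect_cong) (metis)
  then show "std xs ! p = std ys ! p" using assms p by (simp add: std_nth)
qed

lemma std_sub:
  assumes "distinct xs"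
  shows "std (take j (drop i (std xs))) = std (take j (drop i xs))"
proof (rule std_ordiso)
  show "distinct (take j (drop i (std xs)))" using assms distinct_std by (simp add: distinct_take distinct_drop)
  show "distinct (take j (drop i xs))" using assms by (simp add: distinct_take distinct_drop)
  show "length (take j (drop i (std xs))) = length (take j (drop i xs))" by simp
  fix p q assume pq: "p < length (take j (drop i (std xs)))" "q < length (take j (drop i (std xs)))"
  then have "i \<le> length xs" "i + p < length xs" "i + q < length xs" "p < j" "q < j" by auto
  then show "(take j (drop i (std xs)) ! p < take j (drop i (std xs)) ! q) =
       (take j (drop i xs) ! p < take j (drop i xs) ! q)"
    using assms by (simp add: std_less nth_drop)
qed

lemma perm_std:
  assumes "distinct xs" shows "is_perm (std xs)"
proof -
  have sub: "set (std xs) \<subseteq> {1..length xs}"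
  proof
    fix y assume "y \<in> set (std xs)"
    then obtain p where p: "p < length xs" "y = std xs ! p" by (auto simp: in_set_conv_nth)
    have "card {q. q < length xs \<and> xs!q \<le> xs!p} \<le> card {..<length xs}"
      by (rule card_mono) auto
    moreover have "card {q. q < length xs \<and> xs!q \<le> xs!p} \<ge> 1"
    proof -
      have "finite {q. q < length xs \<and> xs!q \<le> xs!p}" by simp
      moreover have "p \<in> {q. q < length xs \<and> xs!q \<le> xs!p}" using p by simp
      ultimately show ?thesis by (metis One_nat_def Suc_leI card_gt_0_iff empty_iff)
    qed
    ultimately show "y \<in> {1..length xs}" using p assms by (simp add: std_nth)
  qed
  have "card (set (std xs)) = length xs" using distinct_std[OF assms] by (simp add: distinct_card)
  then have "set (std xs) = {1..length xs}" using sub by (simp add: card_subset_eq)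
  then show ?thesis using distinct_std[OF assms] by (simp add: is_perm_def)
qed

lemma std_perm:
  assumes "is_perm p" shows "std p = p"
proof -
  have s: "set p = {1..length p}" using assms by (simp add: is_perm_def)
  have "\<And>x. x \<in> set p \<Longrightarrow> card {y \<in> set p. y \<le> x} = x"
  proof -
    fix x assume "x \<in> set p"
    then have "x \<le> length p" using s by auto
    then have "{y \<in> set p. y \<le> x} = {1..x}" using s by auto
    then show "card {y \<in> set p. y \<le> x} = x" by simp
  qed
  then show ?thesis by (simp add: std_def map_idI)
qed

lemma nths_interval: "nths xs {i..<i+k} = take k (drop i xs)"
proof -
  have "{i..<i+k} = (+) i ` {..<k}"
  proof
    show "{i..<i+k} \<subseteq> (+) i ` {..<k}"
    proof
      fix x assume "x \<in> {i..<i+k}"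
      then have "x = i + (x - i)" "x - i < k" by auto
      then show "x \<in> (+) i ` {..<k}" by blast
    qed
  qed auto
  then show ?thesis by (metis nths_drop nths_upt_eq_take)
qed



definition good :: "nat list \<Rightarrow> nat list \<Rightarrow> bool" where
  "good s d \<longleftrightarrow> length d = length s \<and>
     (\<forall>i<length s. 1 \<le> d!i \<and> {d!j | j. j<i \<and> s!i < s!j} = {1..<d!i})"

lemma good_set: "good s d \<Longrightarrow> i < length s \<Longrightarrow> {d!j | j. j<i \<and> s!i < s!j} = {1..<d!i}"
  by (simp add: good_def)

lemma good_pos: "good s d \<Longrightarrow> i < length s \<Longrightarrow> 1 \<le> d!i"
  by (simp add: good_def)

lemma good_len: "good s d \<Longrightarrow> length d = length s"
  by (simp add: good_def)

lemma good_less: "good s d \<Longrightarrow> j < i \<Longrightarrow> i < length s \<Longrightarrow> s!i < s!j \<Longrightarrow> d!j < d!i"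
proof -
  assume g: "good s d" and ji: "j < i" "i < length s" "s!i < s!j"
  then have "d!j \<in> {d!j | j. j<i \<and> s!i < s!j}" by blast
  then have "d!j \<in> {1..<d!i}" using good_set[OF g ji(2)] by simp
  then show ?thesis by simp
qed

lemma good_wit: "good s d \<Longrightarrow> i < length s \<Longrightarrow> 1 \<le> c \<Longrightarrow> c < d!i \<Longrightarrow> \<exists>j<i. s!i < s!j \<and> d!j = c"
proof -
  assume g: "good s d" and h: "i < length s" "1 \<le> c" "c < d!i"
  then have "c \<in> {1..<d!i}" by simp
  then have "c \<in> {d!j | j. j<i \<and> s!i < s!j}" using good_set[OF g h(1)] by simp
  then show ?thesis by blast
qed

lemma good_unique:
  assumes g1: "good s d1" and g2: "good s d2" shows "d1 = d2"
proof -
  have "\<And>i. i < length s \<longrightarrow> d1!i = d2!i"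
  proof -
    fix i show "i < length s \<longrightarrow> d1!i = d2!i"
    proof (induction i rule: less_induct)
      case (less i)
      show ?case
      proof
        assume i: "i < length s"
        have eq: "\<And>j. j < i \<Longrightarrow> d1!j = d2!j" using less i by simp
        have "{d1!j | j. j<i \<and> s!i < s!j} = {d2!j | j. j<i \<and> s!i < s!j}"
        proof (rule set_eqI)
          fix x
          show "(x \<in> {d1!j | j. j<i \<and> s!i < s!j}) = (x \<in> {d2!j | j. j<i \<and> s!i < s!j})"
          proof
            assume "x \<in> {d1!j | j. j<i \<and> s!i < s!j}"
            then obtain j where "x = d1!j" "j<i" "s!i < s!j" by blast
            then show "x \<in> {d2!j | j. j<i \<and> s!i < s!j}" using eq[of j] by (metis (mono_tags, lifting) mem_Collect_eq)
          next
            assume "x \<in> {d2!j | j. j<i \<and> s!i < s!j}"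
            then obtain j where "x = d2!j" "j<i" "s!i < s!j" by blast
            then show "x \<in> {d1!j | j. j<i \<and> s!i < s!j}" using eq[of j] by (metis (mono_tags, lifting) mem_Collect_eq)
          qed
        qed
        then have e: "{1..<d1!i} = {1..<d2!i}" using good_set[OF g1 i] good_set[OF g2 i] by simp
        have p: "1 \<le> d1!i" "1 \<le> d2!i" using g1 g2 i good_pos by auto
        show "d1!i = d2!i"
        proof (rule ccontr)
          assume "d1!i \<noteq> d2!i"
          then have "d1!i < d2!i \<or> d2!i < d1!i" by linarith
          then show False
          proof
            assume "d1!i < d2!i" then have "d1!i \<in> {1..<d2!i}" using p by simp
            then show False using e by (metis atLeastLessThan_iff less_irrefl)
          next
            assume "d2!i < d1!i" then have "d2!i \<in> {1..<d1!i}" using p by simp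
            then show False using e by (metis atLeastLessThan_iff less_irrefl)
          qed
        qed
      qed
    qed
  qed
  moreover have "length d1 = length d2" using g1 g2 good_len by simp
  ultimately show ?thesis using good_len[OF g1] by (simp add: nth_equalityI)
qed



lemma setcompr_cong: assumes "\<And>j. P j \<Longrightarrow> f j = g j" shows "{f j | j. P j} = {g j | j. P j}"
proof (rule set_eqI)
  fix x show "(x \<in> {f j | j. P j}) = (x \<in> {g j | j. P j})"
  proof
    assume "x \<in> {f j | j. P j}" then obtain j where "x = f j" "P j" by blast
    then have "x = g j" "P j" using assms[of j] by simp_all
    then show "x \<in> {g j | j. P j}" by blast
  next
    assume "x \<in> {g j | j. P j}" then obtain j where "x = g j" "P j" by blast
    then have "x = f j" "P j" using assms[of j] by simp_all
    then show "x \<in> {f j | j. P j}" by blast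
  qed
qed

definition rstep :: "nat \<Rightarrow> nat list \<Rightarrow> nat list" where
  "rstep i c = c[i := (LEAST c'. 1 \<le> c' \<and> (\<forall>j<i. c ! j \<noteq> c'))]"

definition rinv :: "nat list \<Rightarrow> nat set \<Rightarrow> nat list \<Rightarrow> bool" where
  "rinv s D c \<longleftrightarrow> length c = length s \<and> D \<subseteq> {..<length s} \<and>
     (\<forall>i<length s. i \<notin> D \<longrightarrow> c!i = 0) \<and>
     (\<forall>i\<in>D. 1 \<le> c!i \<and> {c!j | j. j<i \<and> s!i < s!j} = {1..<c!i}) \<and>
     (\<forall>i\<in>D. \<forall>j<length s. s!i < s!j \<longrightarrow> j \<in> D)"

lemma rinv_step:
  assumes ds: "distinct s" and inv: "rinv s D c" and i: "i < length s" "i \<notin> D"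
    and up: "\<forall>j<length s. s!i < s!j \<longrightarrow> j \<in> D"
  shows "rinv s (insert i D) (rstep i c)"
proof -
  have lc: "length c = length s" and Dsub: "D \<subseteq> {..<length s}"
    and z: "\<And>i. i<length s \<Longrightarrow> i \<notin> D \<Longrightarrow> c!i = 0"
    and st: "\<And>i. i\<in>D \<Longrightarrow> 1 \<le> c!i \<and> {c!j | j. j<i \<and> s!i < s!j} = {1..<c!i}"
    and cl: "\<And>i j. i\<in>D \<Longrightarrow> j<length s \<Longrightarrow> s!i < s!j \<Longrightarrow> j \<in> D"
    using inv unfolding rinv_def by blast+
  have Deq: "\<And>j. j \<in> D \<longleftrightarrow> j < length s \<and> s!i < s!j"
  proof
    fix j assume jD: "j \<in> D"
    then have jl: "j < length s" using Dsub by auto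
    have "j \<noteq> i" using jD i by auto
    then have "s!j \<noteq> s!i" using ds jl i by (simp add: nth_eq_iff_index_eq)
    moreover have "\<not> s!j < s!i" using cl[OF jD i(1)] i(2) by auto
    ultimately show "j < length s \<and> s!i < s!j" using jl by simp
  next
    fix j assume "j < length s \<and> s!i < s!j" then show "j \<in> D" using up by simp
  qed
  define E where "E = {c!j | j. j<i \<and> s!i < s!j}"
  have Epos: "\<And>x. x \<in> E \<Longrightarrow> 1 \<le> x"
  proof -
    fix x assume "x \<in> E"
    then obtain j where "x = c!j" "j<i" "s!i<s!j" unfolding E_def by blast
    then have "j \<in> D" using Deq i by simp
    then show "1 \<le> x" using st \<open>x = c!j\<close> by simp
  qed
  have Edown: "\<And>x y. x \<in> E \<Longrightarrow> 1 \<le> y \<Longrightarrow> y < x \<Longrightarrow> y \<in> E"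
  proof -
    fix x y assume "x \<in> E" "1 \<le> y" "y < x"
    then obtain j where j: "x = c!j" "j<i" "s!i<s!j" unfolding E_def by blast
    then have jD: "j \<in> D" using Deq i by simp
    then have "y \<in> {c!j' | j'. j'<j \<and> s!j < s!j'}" using st[OF jD] j \<open>1 \<le> y\<close> \<open>y < x\<close> by simp
    then obtain j' where "y = c!j'" "j'<j" "s!j < s!j'" by blast
    moreover have "j' < i" "s!i < s!j'" using j \<open>j'<j\<close> \<open>s!j < s!j'\<close> by simp_all
    ultimately show "y \<in> E" unfolding E_def by blast
  qed
  have cond: "\<And>c'. 1 \<le> c' \<Longrightarrow> (\<forall>j<i. c ! j \<noteq> c') \<longleftrightarrow> c' \<notin> E"
  proof -
    fix c' :: nat assume c1: "1 \<le> c'"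
    show "(\<forall>j<i. c ! j \<noteq> c') \<longleftrightarrow> c' \<notin> E"
    proof
      assume h: "\<forall>j<i. c ! j \<noteq> c'"
      show "c' \<notin> E"
      proof
        assume "c' \<in> E"
        then obtain j where "c' = c!j" "j<i" unfolding E_def by blast
        then show False using h by blast
      qed
    next
      assume h: "c' \<notin> E"
      show "\<forall>j<i. c ! j \<noteq> c'"
      proof (intro allI impI)
        fix j assume ji: "j < i"
        show "c!j \<noteq> c'"
        proof (cases "s!i < s!j")
          case True then have "c!j \<in> E" unfolding E_def using ji by blast
          then show ?thesis using h by auto
        next
          case False
          then have "j \<notin> D" using Deq by simp
          then have "c!j = 0" using z ji i by simp
          then show ?thesis using c1 by simp
        qed
      qed
    qed
  qed
  define v where "v = (LEAST c'. 1 \<le> c' \<and> (\<forall>j<i. c ! j \<noteq> c'))"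
  have veq: "v = (LEAST c'. 1 \<le> c' \<and> c' \<notin> E)"
    unfolding v_def by (intro arg_cong[where f=Least] ext) (meson cond)
  have finE: "finite E"
  proof -
    have "E \<subseteq> (!) c ` {..<i}" unfolding E_def by blast
    then show ?thesis by (rule finite_subset) simp
  qed
  have ex: "1 \<le> Suc (Max (insert 0 E)) \<and> Suc (Max (insert 0 E)) \<notin> E"
  proof -
    have "\<And>x. x \<in> E \<Longrightarrow> x \<le> Max (insert 0 E)" using finE by simp
    then have "Suc (Max (insert 0 E)) \<notin> E" by (metis Suc_n_not_le_n)
    then show ?thesis by simp
  qed
  have v1: "1 \<le> v \<and> v \<notin> E" unfolding veq by (rule LeastI[of _ "Suc (Max (insert 0 E))"]) (rule ex)
  have vmin: "\<And>y. 1 \<le> y \<Longrightarrow> y < v \<Longrightarrow> y \<in> E"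
  proof -
    fix y assume "1 \<le> y" "y < v"
    then show "y \<in> E" using not_less_Least[of y "\<lambda>c'. 1 \<le> c' \<and> c' \<notin> E"] veq by auto
  qed
  have Eeq: "E = {1..<v}"
  proof
    show "E \<subseteq> {1..<v}"
    proof
      fix x assume x: "x \<in> E"
      have "\<not> v \<le> x"
      proof
        assume "v \<le> x"
        then have "v = x \<or> v < x" by linarith
        then have "v \<in> E"
        proof
          assume "v = x" then show ?thesis using x by simp
        next
          assume "v < x" then show ?thesis using Edown[OF x, of v] v1 by blast
        qed
        then show False using v1 by simp
      qed
      then show "x \<in> {1..<v}" using Epos[OF x] by simp
    qed
  next
    show "{1..<v} \<subseteq> E" using vmin by auto
  qed
  have rs: "rstep i c = c[i := v]" unfolding rstep_def v_def by simp
  show ?thesis unfolding rinv_def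
  proof (intro conjI ballI allI impI)
    show "length (rstep i c) = length s" using lc rs by simp
    show "insert i D \<subseteq> {..<length s}" using Dsub i by simp
  next
    fix i' assume "i' < length s" "i' \<notin> insert i D"
    then show "rstep i c ! i' = 0" using z rs by simp
  next
    fix i' assume i': "i' \<in> insert i D"
    have "1 \<le> rstep i c ! i' \<and> {rstep i c ! j | j. j<i' \<and> s!i' < s!j} = {1..<rstep i c ! i'}"
    proof (cases "i' = i")
      case True
      have "{rstep i c ! j | j. j<i' \<and> s!i' < s!j} = E"
        unfolding E_def True rs by (rule setcompr_cong) simp
      then show ?thesis using True rs lc i Eeq v1 by simp
    next
      case False
      then have iD: "i' \<in> D" using i' by simp
      have "{rstep i c ! j | j. j<i' \<and> s!i' < s!j} = {c!j | j. j<i' \<and> s!i' < s!j}"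
      proof -
        have "s!i < s!i'" using Deq[of i'] iD by simp
        then have "\<And>j. s!i' < s!j \<Longrightarrow> j \<noteq> i" by auto
        then show ?thesis unfolding rs by (intro setcompr_cong) (metis nth_list_update_neq)
      qed
      then show ?thesis using st[OF iD] rs False by simp
    qed
    then show "1 \<le> rstep i c ! i'" "{rstep i c ! j | j. j<i' \<and> s!i' < s!j} = {1..<rstep i c ! i'}" by simp_all
  next
    fix i' j assume i': "i' \<in> insert i D" and j: "j < length s" "s!i' < s!j"
    show "j \<in> insert i D"
    proof (cases "i' = i")
      case True then show ?thesis using up j by simp
    next
      case False then show ?thesis using cl i' j by simp
    qed
  qed
qed

lemma rinv_fold:
  assumes "distinct s"
  shows "rinv s D c \<Longrightarrow> distinct xs \<Longrightarrow> set xs \<inter> D = {} \<Longrightarrow> set xs \<subseteq> {..<length s} \<Longrightarrow>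
    (\<forall>p<length xs. \<forall>j<length s. s!(xs!p) < s!j \<longrightarrow> j \<in> D \<union> set (take p xs)) \<Longrightarrow>
    rinv s (D \<union> set xs) (fold rstep xs c)"
proof (induction xs arbitrary: D c)
  case Nil then show ?case by simp
next
  case (Cons i xs)
  have i: "i < length s" "i \<notin> D" using Cons.prems by auto
  have up: "\<forall>j<length s. s!i < s!j \<longrightarrow> j \<in> D"
  proof (intro allI impI)
    fix j assume "j < length s" "s!i < s!j"
    then have "j \<in> D \<union> set (take 0 (i#xs))" using Cons.prems(5) by (metis length_Cons nth_Cons_0 zero_less_Suc)
    then show "j \<in> D" by simp
  qed
  have r1: "rinv s (insert i D) (rstep i c)" by (rule rinv_step[OF assms Cons.prems(1) i up])
  have "rinv s (insert i D \<union> set xs) (fold rstep xs (rstep i c))"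
  proof (rule Cons.IH[OF r1])
    show "distinct xs" using Cons.prems by simp
    show "set xs \<inter> insert i D = {}" using Cons.prems by auto
    show "set xs \<subseteq> {..<length s}" using Cons.prems by simp
    show "\<forall>p<length xs. \<forall>j<length s. s ! (xs ! p) < s ! j \<longrightarrow> j \<in> insert i D \<union> set (take p xs)"
    proof (intro allI impI)
      fix p j assume p: "p < length xs" and j: "j < length s" "s ! (xs ! p) < s ! j"
      have "j \<in> D \<union> set (take (Suc p) (i#xs))" using Cons.prems(5) p j
        by (metis Suc_less_eq length_Cons nth_Cons_Suc)
      then show "j \<in> insert i D \<union> set (take p xs)" by simp
    qed
  qed
  then show ?case by simp
qed

lemma good_ritmo:
  assumes ds: "distinct s" shows "good s (ritmo s)"
proof -
  define L where "L = rev (sort_key (\<lambda>i. s ! i) [0..<length s])"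
  have setL: "set L = {..<length s}" unfolding L_def by auto
  have dL: "distinct L" unfolding L_def by simp
  have lL: "length L = length s" unfolding L_def by simp
  have srt: "sorted (map (\<lambda>i. s!i) (sort_key (\<lambda>i. s ! i) [0..<length s]))" by simp
  have dec: "\<And>p q. p \<le> q \<Longrightarrow> q < length L \<Longrightarrow> s!(L!q) \<le> s!(L!p)"
  proof -
    fix p q assume pq: "p \<le> q" "q < length L"
    let ?K = "sort_key (\<lambda>i. s ! i) [0..<length s]"
    have lK: "length ?K = length L" unfolding L_def by simp
    have "L!q = ?K ! (length ?K - Suc q)" "L!p = ?K ! (length ?K - Suc p)"
      using pq lK unfolding L_def by (simp_all add: rev_nth)
    moreover have "map (\<lambda>i. s!i) ?K ! (length ?K - Suc q) \<le> map (\<lambda>i. s!i) ?K ! (length ?K - Suc p)"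
      using sorted_nth_mono[OF srt] pq lK by simp
    ultimately show "s!(L!q) \<le> s!(L!p)" using pq lK by simp
  qed
  have r0: "rinv s {} (replicate (length s) 0)" unfolding rinv_def by simp
  have "rinv s ({} \<union> set L) (fold rstep L (replicate (length s) 0))"
  proof (rule rinv_fold[OF ds r0 dL])
    show "set L \<inter> {} = {}" by simp
    show "set L \<subseteq> {..<length s}" using setL by simp
    show "\<forall>p<length L. \<forall>j<length s. s ! (L ! p) < s ! j \<longrightarrow> j \<in> {} \<union> set (take p L)"
    proof (intro allI impI)
      fix p j assume p: "p < length L" and j: "j < length s" "s ! (L ! p) < s ! j"
      obtain q where q: "q < length L" "L!q = j" using setL j by (metis in_set_conv_nth lessThan_iff)
      have "q < p"
      proof (rule ccontr)
        assume "\<not> q < p" then have "p \<le> q" by simp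
        then have "s!(L!q) \<le> s!(L!p)" using dec[of p q] q by simp
        then show False using j q by simp
      qed
      then show "j \<in> {} \<union> set (take p L)" using q p by (metis Un_empty_left in_set_conv_nth length_take min_less_iff_conj nth_take)
    qed
  qed
  moreover have "ritmo s = fold rstep L (replicate (length s) 0)"
    unfolding ritmo_def L_def rstep_def by simp
  ultimately have inv: "rinv s {..<length s} (ritmo s)" using setL by simp
  then show ?thesis unfolding rinv_def good_def by auto
qed

lemma ritmo_eq: "distinct s \<Longrightarrow> good s d \<Longrightarrow> ritmo s = d"
  using good_ritmo good_unique by blast



lemma setcompr_cong2: assumes "\<And>j. P j \<longleftrightarrow> Q j" shows "{f j | j. P j} = {f j | j. Q j}"
  using assms by simp

lemma setcompr_cong3:
  assumes "\<And>j. P j \<longleftrightarrow> Q j" "\<And>j. P j \<Longrightarrow> f j = g j"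
  shows "{f j | j. P j} = {g j | j. Q j}"
proof -
  have "{f j | j. P j} = {g j | j. P j}" using assms(2) by (rule setcompr_cong)
  also have "\<dots> = {g j | j. Q j}" using assms(1) by (rule setcompr_cong2)
  finally show ?thesis .
qed

lemma good_oiso:
  assumes l: "length xs = length ys"
    and o: "\<And>p q. p < length xs \<Longrightarrow> q < length xs \<Longrightarrow> (xs!p < xs!q) = (ys!p < ys!q)"
  shows "good xs d = good ys d"
proof -
  have "\<And>i. i < length xs \<Longrightarrow> {d!j | j. j<i \<and> xs!i < xs!j} = {d!j | j. j<i \<and> ys!i < ys!j}"
  proof -
    fix i assume i: "i < length xs"
    show "{d!j | j. j<i \<and> xs!i < xs!j} = {d!j | j. j<i \<and> ys!i < ys!j}"
    proof (rule setcompr_cong2)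
      fix j show "(j<i \<and> xs!i < xs!j) = (j<i \<and> ys!i < ys!j)"
      proof (cases "j < i")
        case True then show ?thesis using o[of i j] i by simp
      qed simp
    qed
  qed
  then show ?thesis unfolding good_def using l by simp
qed

lemma good_take: assumes g: "good xs d" shows "good (take t xs) (take t d)"
proof -
  have l: "length d = length xs" using g by (simp add: good_def)
  show ?thesis unfolding good_def
  proof (intro conjI allI impI)
    show "length (take t d) = length (take t xs)" using l by simp
    fix i assume i: "i < length (take t xs)"
    then have it: "i < t" "i < length xs" by auto
    show "1 \<le> take t d ! i" using good_pos[OF g it(2)] it by simp
    have "{take t d ! j | j. j<i \<and> take t xs ! i < take t xs ! j} = {d ! j | j. j<i \<and> xs ! i < xs ! j}"
    proof (rule setcompr_cong3)
      fix j
      show "(j<i \<and> take t xs ! i < take t xs ! j) = (j<i \<and> xs ! i < xs ! j)"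
        using it by (cases "j < i") simp_all
      show "j<i \<and> take t xs ! i < take t xs ! j \<Longrightarrow> take t d ! j = d ! j" using it by simp
    qed
    then show "{take t d ! j | j. j<i \<and> take t xs ! i < take t xs ! j} = {1..<take t d ! i}"
      using good_set[OF g it(2)] it by simp
  qed
qed

lemma good_snoc:
  assumes g: "good xs d" and c: "1 \<le> c" and E: "{d!j | j. j < length xs \<and> x < xs!j} = {1..<c}"
  shows "good (xs@[x]) (d@[c])"
proof -
  have l: "length d = length xs" using g by (simp add: good_def)
  show ?thesis unfolding good_def
  proof (intro conjI allI impI)
    show "length (d@[c]) = length (xs@[x])" using l by simp
    fix i assume i: "i < length (xs@[x])"
    show "1 \<le> (d@[c]) ! i"
    proof (cases "i < length xs")
      case True then show ?thesis using good_pos[OF g True] l by (simp add: nth_append)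
    next
      case False then have "i = length xs" using i by simp
      then show ?thesis using c l by (simp add: nth_append)
    qed
    show "{(d@[c]) ! j | j. j<i \<and> (xs@[x]) ! i < (xs@[x]) ! j} = {1..<(d@[c]) ! i}"
    proof (cases "i < length xs")
      case True
      have "{(d@[c]) ! j | j. j<i \<and> (xs@[x]) ! i < (xs@[x]) ! j} = {d ! j | j. j<i \<and> xs ! i < xs ! j}"
      proof (rule setcompr_cong3)
        fix j
        show "(j<i \<and> (xs@[x]) ! i < (xs@[x]) ! j) = (j<i \<and> xs ! i < xs ! j)"
          using True by (cases "j < i") (simp_all add: nth_append)
        show "j<i \<and> (xs@[x]) ! i < (xs@[x]) ! j \<Longrightarrow> (d@[c]) ! j = d ! j" using True l by (simp add: nth_append)
      qed
      then show ?thesis using good_set[OF g True] True l by (simp add: nth_append)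
    next
      case False then have ii: "i = length xs" using i by simp
      have "{(d@[c]) ! j | j. j<i \<and> (xs@[x]) ! i < (xs@[x]) ! j} = {d!j | j. j < length xs \<and> x < xs!j}"
      proof (rule setcompr_cong3)
        fix j
        show "(j<i \<and> (xs@[x]) ! i < (xs@[x]) ! j) = (j < length xs \<and> x < xs!j)"
          using ii by (cases "j < i") (simp_all add: nth_append)
        show "j<i \<and> (xs@[x]) ! i < (xs@[x]) ! j \<Longrightarrow> (d@[c]) ! j = d ! j" using ii l by (simp add: nth_append)
      qed
      then show ?thesis using E ii l by (simp add: nth_append)
    qed
  qed
qed

lemma good_app:
  assumes gA: "good A dA" and gB: "good B dB" and lt: "\<And>a b. a \<in> set A \<Longrightarrow> b \<in> set B \<Longrightarrow> a < b"
  shows "good (A@B) (dA@dB)"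
proof -
  have lA: "length dA = length A" using gA by (simp add: good_def)
  have lB: "length dB = length B" using gB by (simp add: good_def)
  show ?thesis unfolding good_def
  proof (intro conjI allI impI)
    show "length (dA@dB) = length (A@B)" using lA lB by simp
    fix i assume i: "i < length (A@B)"
    show "1 \<le> (dA@dB) ! i"
    proof (cases "i < length A")
      case True then show ?thesis using good_pos[OF gA True] lA by (simp add: nth_append)
    next
      case False then have "i - length A < length B" using i by simp
      then show ?thesis using good_pos[OF gB] False lA by (simp add: nth_append)
    qed
    show "{(dA@dB) ! j | j. j<i \<and> (A@B) ! i < (A@B) ! j} = {1..<(dA@dB) ! i}"
    proof (cases "i < length A")
      case True
      have "{(dA@dB) ! j | j. j<i \<and> (A@B) ! i < (A@B) ! j} = {dA ! j | j. j<i \<and> A ! i < A ! j}"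
      proof (rule setcompr_cong3)
        fix j
        show "(j<i \<and> (A@B) ! i < (A@B) ! j) = (j<i \<and> A ! i < A ! j)"
          using True by (cases "j < i") (simp_all add: nth_append)
        show "j<i \<and> (A@B) ! i < (A@B) ! j \<Longrightarrow> (dA@dB) ! j = dA ! j" using True lA by (simp add: nth_append)
      qed
      then show ?thesis using good_set[OF gA True] True lA by (simp add: nth_append)
    next
      case False
      define t where "t = i - length A"
      have t: "t < length B" "i = length A + t" using i False unfolding t_def by auto
      have "{(dA@dB) ! j | j. j<i \<and> (A@B) ! i < (A@B) ! j} = {dB ! j | j. j < t \<and> B ! t < B ! j}"
      proof -
        have "{(dA@dB) ! j | j. j<i \<and> (A@B) ! i < (A@B) ! j} = {(dA@dB) ! (length A + j) | j. j < t \<and> B ! t < B ! j}"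
        proof (rule set_eqI)
          fix x show "(x \<in> {(dA@dB) ! j | j. j<i \<and> (A@B) ! i < (A@B) ! j}) = (x \<in> {(dA@dB) ! (length A + j) | j. j < t \<and> B ! t < B ! j})"
          proof
            assume "x \<in> {(dA@dB) ! j | j. j<i \<and> (A@B) ! i < (A@B) ! j}"
            then obtain j where j: "x = (dA@dB) ! j" "j<i" "(A@B) ! i < (A@B) ! j" by blast
            have ABi: "(A@B) ! i = B ! t" using t by (simp add: nth_append)
            have "\<not> j < length A"
            proof
              assume ja: "j < length A"
              then have "A!j \<in> set A" by simp
              moreover have "B!t \<in> set B" using t by simp
              ultimately have "A!j < B!t" using lt by simp
              then show False using j(3) ABi ja by (simp add: nth_append)
            qed
            define j' where "j' = j - length A"
            have jj: "j = length A + j'" using \<open>\<not> j < length A\<close> unfolding j'_def by simp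
            have "(A@B) ! j = B ! j'" using jj by (simp add: nth_append)
            then have "x = (dA@dB) ! (length A + j') \<and> j' < t \<and> B ! t < B ! j'"
              using j jj t ABi by simp
            then show "x \<in> {(dA@dB) ! (length A + j) | j. j < t \<and> B ! t < B ! j}" by blast
          next
            assume "x \<in> {(dA@dB) ! (length A + j) | j. j < t \<and> B ! t < B ! j}"
            then obtain j where j: "x = (dA@dB) ! (length A + j)" "j < t" "B ! t < B ! j" by blast
            have "length A + j < i" "(A@B) ! i < (A@B) ! (length A + j)" using j t by (simp_all add: nth_append)
            then show "x \<in> {(dA@dB) ! j | j. j<i \<and> (A@B) ! i < (A@B) ! j}" using j(1) by blast
          qed
        qed
        also have "\<dots> = {dB ! j | j. j < t \<and> B ! t < B ! j}"
          by (rule setcompr_cong) (simp add: nth_append lA)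
        finally show ?thesis .
      qed
      then show ?thesis using good_set[OF gB t(1)] t lA by (simp add: nth_append)
    qed
  qed
qed



definition dchain :: "nat list \<Rightarrow> nat list \<Rightarrow> bool" where
  "dchain xs is \<longleftrightarrow> sorted_wrt (<) is \<and> (\<forall>i\<in>set is. i < length xs) \<and>
     sorted_wrt (\<lambda>a b. b < a) (map ((!) xs) is)"

lemma sw_last: "sorted_wrt P zs \<Longrightarrow> y \<in> set (butlast zs) \<Longrightarrow> P y (last zs)"
proof -
  assume s: "sorted_wrt P zs" and y: "y \<in> set (butlast zs)"
  then have ne: "zs \<noteq> []" by auto
  then have "zs = butlast zs @ [last zs]" by simp
  then have "sorted_wrt P (butlast zs @ [last zs])" using s by simp
  then show ?thesis using y by (simp add: sorted_wrt_append)
qed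

lemma chain_col:
  assumes g: "good xs d"
  shows "dchain xs is \<Longrightarrow> is \<noteq> [] \<Longrightarrow> length is \<le> d!(last is)"
proof (induction "is" rule: rev_induct)
  case Nil then show ?case by simp
next
  case (snoc i js)
  have il: "i < length xs" using snoc.prems unfolding dchain_def by simp
  show ?case
  proof (cases "js = []")
    case True then show ?thesis using good_pos[OF g il] by simp
  next
    case False
    have dj: "dchain xs js" using snoc.prems(1) unfolding dchain_def by (simp add: sorted_wrt_append)
    have IH: "length js \<le> d!(last js)" using snoc.IH[OF dj False] .
    have lj: "last js \<in> set js" using False by simp
    have "last js < i" using snoc.prems(1) lj unfolding dchain_def by (simp add: sorted_wrt_append)
    moreover have "xs!i < xs!(last js)" using snoc.prems(1) lj unfolding dchain_def by (simp add: sorted_wrt_append)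
    ultimately have "d!(last js) < d!i" using good_less[OF g _ il] by simp
    then show ?thesis using IH by simp
  qed
qed

lemma col_chain:
  assumes g: "good xs d"
  shows "1 \<le> c \<Longrightarrow> i < length xs \<Longrightarrow> c \<le> d!i \<Longrightarrow> \<exists>is. dchain xs is \<and> length is = c \<and> is \<noteq> [] \<and> last is = i"
proof (induction c arbitrary: i rule: nat_induct_at_least)
  case base
  then show ?case by (intro exI[of _ "[i]"]) (simp add: dchain_def)
next
  case (Suc c)
  then have "c < d!i" by simp
  then obtain j where j: "j < i" "xs!i < xs!j" "d!j = c" using good_wit[OF g Suc.prems(1)] Suc.hyps by blast
  then have jl: "j < length xs" using Suc.prems by simp
  obtain js where js: "dchain xs js" "length js = c" "js \<noteq> []" "last js = j"
    using Suc.IH[OF jl] j(3) by auto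
  have sj: "sorted_wrt (<) js" and vj: "sorted_wrt (\<lambda>a b. b < a) (map ((!) xs) js)"
    and bj: "\<forall>i\<in>set js. i < length xs" using js(1) unfolding dchain_def by auto
  have le1: "\<And>y. y \<in> set js \<Longrightarrow> y < i"
  proof -
    fix y assume y: "y \<in> set js"
    have "y = last js \<or> y \<in> set (butlast js)" using y js(3)
      by (metis append_butlast_last_id rotate1.simps(2) set_ConsD set_rotate1)
    then show "y < i"
    proof
      assume "y = last js" then show ?thesis using js(4) j(1) by simp
    next
      assume "y \<in> set (butlast js)" then have "y < last js" using sw_last[OF sj] by simp
      then show ?thesis using js(4) j(1) by simp
    qed
  qed
  have le2: "\<And>y. y \<in> set js \<Longrightarrow> xs!i < xs!y"
  proof -
    fix y assume y: "y \<in> set js"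
    have "y = last js \<or> y \<in> set (butlast js)" using y js(3)
      by (metis append_butlast_last_id rotate1.simps(2) set_ConsD set_rotate1)
    then show "xs!i < xs!y"
    proof
      assume "y = last js" then show ?thesis using js(4) j(2) by simp
    next
      assume yb: "y \<in> set (butlast js)"
      have "xs!y \<in> set (butlast (map ((!) xs) js))" using yb by (simp add: map_butlast[symmetric])
      then have "last (map ((!) xs) js) < xs!y" using sw_last[OF vj] by simp
      then show ?thesis using js(3,4) j(2) by (simp add: last_map)
    qed
  qed
  have "dchain xs (js @ [i])" unfolding dchain_def
    using sj vj bj le1 le2 Suc.prems(1) by (simp add: sorted_wrt_append)
  then show ?case using js(2) by (intro exI[of _ "js @ [i]"]) simp
qed

lemma nths_idx: "nths xs I = map ((!) xs) (filter (\<lambda>i. i \<in> I) [0..<length xs])"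
proof -
  have "zip xs [0..<length xs] = map (\<lambda>i. (xs!i, i)) [0..<length xs]"
    by (rule nth_equalityI) simp_all
  then show ?thesis unfolding nths_def by (simp add: filter_map comp_def)
qed

lemma decr_nth: "p < n \<Longrightarrow> decr n ! p = n - p"
  unfolding decr_def by (simp add: rev_nth del: upt_Suc)

lemma length_decr[simp]: "length (decr n) = n"
  unfolding decr_def by simp

lemma sw_dec_distinct: "sorted_wrt (\<lambda>a b. b < a) ys \<Longrightarrow> distinct (ys::nat list)"
proof -
  assume "sorted_wrt (\<lambda>a b. b < a) ys"
  then have "sorted_wrt (<) (rev ys)" by (simp add: sorted_wrt_rev)
  then show "distinct ys" by (simp add: strict_sorted_iff)
qed

lemma std_decreasing:
  assumes sw: "sorted_wrt (\<lambda>a b. b < a) ys"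
  shows "std ys = decr (length ys)"
proof (rule nth_equalityI)
  show "length (std ys) = length (decr (length ys))" by simp
  fix p assume p0: "p < length (std ys)"
  then have p: "p < length ys" by simp
  have ds: "distinct ys" using sw_dec_distinct[OF sw] .
  have "{q. q < length ys \<and> ys!q \<le> ys!p} = {p..<length ys}"
  proof (rule set_eqI)
    fix q show "(q \<in> {q. q < length ys \<and> ys!q \<le> ys!p}) = (q \<in> {p..<length ys})"
    proof (cases "q < length ys")
      case True
      show ?thesis
      proof (cases "q < p")
        case True
        then have "ys!q > ys!p" using sorted_wrt_nth_less[OF sw True p] by simp
        then show ?thesis using True by simp
      next
        case False
        then have "ys!q \<le> ys!p"
        proof (cases "q = p")
          case False
          then have "p < q" using \<open>\<not> q < p\<close> by simp
          then show ?thesis using sorted_wrt_nth_less[OF sw _ \<open>q < length ys\<close>] by fastforce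
        qed simp
        then show ?thesis using False \<open>q < length ys\<close> by simp
      qed
    qed simp
  qed
  then have "std ys ! p = length ys - p" using std_nth[OF ds p] by simp
  then show "std ys ! p = decr (length ys) ! p" using decr_nth[OF p] by simp
qed

lemma avoids_chain:
  assumes ds: "distinct xs"
  shows "avoids xs (decr n) \<longleftrightarrow> \<not> (\<exists>is. dchain xs is \<and> length is = n)"
proof
  assume av: "avoids xs (decr n)"
  show "\<not> (\<exists>is. dchain xs is \<and> length is = n)"
  proof
    assume "\<exists>is. dchain xs is \<and> length is = n"
    then obtain "is" where c: "dchain xs is" "length is = n" by blast
    have s1: "sorted_wrt (<) is" and b: "\<forall>i\<in>set is. i < length xs"
      and s2: "sorted_wrt (\<lambda>a b. b < a) (map ((!) xs) is)" using c(1) unfolding dchain_def by auto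
    have f: "filter (\<lambda>i. i \<in> set is) [0..<length xs] = is"
    proof (rule sorted_distinct_set_unique)
      show "sorted (filter (\<lambda>i. i \<in> set is) [0..<length xs])" using sorted_wrt_filter[OF sorted_upt] by blast
      show "distinct (filter (\<lambda>i. i \<in> set is) [0..<length xs])" by simp
      show "sorted is" "distinct is" using s1 by (simp_all add: strict_sorted_iff)
      show "set (filter (\<lambda>i. i \<in> set is) [0..<length xs]) = set is" using b by auto
    qed
    have "pat (set is) xs = decr n"
      unfolding pat_def nths_idx f using std_decreasing[OF s2] c(2) by simp
    moreover have "set is \<subseteq> {0..<length xs}" using b by auto
    ultimately show False using av unfolding avoids_def by blast
  qed
next
  assume nc: "\<not> (\<exists>is. dchain xs is \<and> length is = n)"
  show "avoids xs (decr n)" unfolding avoids_def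
  proof
    assume "\<exists>I\<subseteq>{0..<length xs}. pat I xs = decr n"
    then obtain I where I: "pat I xs = decr n" by blast
    define "is" where "is = filter (\<lambda>i. i \<in> I) [0..<length xs]"
    define ys where "ys = map ((!) xs) is"
    have sd: "std ys = decr n" using I unfolding pat_def nths_idx ys_def is_def .
    have ln: "length ys = n" using arg_cong[OF sd, of length] by simp
    have s1: "sorted_wrt (<) is" unfolding is_def by (simp add: sorted_wrt_filter)
    have b: "\<forall>i\<in>set is. i < length xs" unfolding is_def by simp
    have dis: "distinct is" using s1 by (simp add: strict_sorted_iff)
    have dys: "distinct ys" unfolding ys_def using dis b ds
      by (simp add: distinct_map inj_on_def nth_eq_iff_index_eq)
    have s2: "sorted_wrt (\<lambda>a b. b < a) ys"
    proof (rule sorted_wrt_iff_nth_less[THEN iffD2], intro allI impI)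
      fix p q assume pq: "p < q" "q < length ys"
      have "std ys ! q < std ys ! p" using sd ln pq by (simp add: decr_nth)
      then show "ys ! q < ys ! p" using std_less[OF dys] pq by simp
    qed
    have "dchain xs is \<and> length is = n" using s1 b s2 ln unfolding dchain_def ys_def by simp
    then show False using nc by blast
  qed
qed

lemma avoids_col:
  assumes ds: "distinct xs" and g: "good xs d" and n: "1 \<le> n"
  shows "avoids xs (decr n) \<longleftrightarrow> (\<forall>i<length xs. d!i < n)"
proof
  assume av: "avoids xs (decr n)"
  show "\<forall>i<length xs. d!i < n"
  proof (intro allI impI)
    fix i assume i: "i < length xs"
    show "d!i < n"
    proof (rule ccontr)
      assume "\<not> d!i < n"
      then obtain "is" where "dchain xs is" "length is = n" using col_chain[OF g n i] by auto
      then show False using av avoids_chain[OF ds] by blast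
    qed
  qed
next
  assume h: "\<forall>i<length xs. d!i < n"
  show "avoids xs (decr n)"
  proof (rule avoids_chain[OF ds, THEN iffD2], rule notI)
    assume "\<exists>is. dchain xs is \<and> length is = n"
    then obtain "is" where c: "dchain xs is" "length is = n" by blast
    then have ne: "is \<noteq> []" using n by auto
    have "last is < length xs" using c(1) ne unfolding dchain_def by simp
    then show False using chain_col[OF g c(1) ne] h c(2) by fastforce
  qed
qed



definition wn :: "nat \<Rightarrow> nat \<Rightarrow> nat list \<Rightarrow> cperm" where
  "wn j i s = (std (take j (drop i s)), take j (drop i (ritmo s)))"

lemma cpat_S: "cpat {i..<i+k} (S s) = wn k i s"
  unfolding cpat_def pat_def S_def wn_def by (simp add: nths_interval)

lemma cw_eq: "coloured_walk k s = map (\<lambda>i. wn k i s) [0..<length s - k + 1]"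
  unfolding coloured_walk_def using cpat_S by simp

lemma length_ritmo[simp]: "distinct s \<Longrightarrow> length (ritmo s) = length s"
  using good_ritmo good_len by blast

lemma tgt_wn:
  assumes ds: "distinct s" and k: "1 \<le> k" and ik: "i + k \<le> length s"
  shows "tgt k (wn k i s) = wn (k-1) (Suc i) s"
proof -
  have lf: "length (fst (wn k i s)) = k" using ik unfolding wn_def by simp
  have I: "{length (fst (wn k i s)) - (k - 1)..<length (fst (wn k i s))} = {1..<1 + (k-1)}"
    using lf k by simp
  have dT: "distinct (take k (drop i s))" using ds by simp
  have "std (take (k-1) (drop 1 (std (take k (drop i s))))) = std (take (k-1) (drop 1 (take k (drop i s))))"
    by (rule std_sub[OF dT])
  also have "take (k-1) (drop 1 (take k (drop i s))) = take (k-1) (drop (Suc i) s)"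
    using k by (simp add: drop_take)
  finally have e1: "std (take (k-1) (drop 1 (std (take k (drop i s))))) = std (take (k-1) (drop (Suc i) s))" .
  have e2: "take (k-1) (drop 1 (take k (drop i (ritmo s)))) = take (k-1) (drop (Suc i) (ritmo s))"
    using k by (simp add: drop_take)
  show ?thesis unfolding tgt_def en_def I
    unfolding cpat_def pat_def nths_interval
    using e1 e2 by (simp add: wn_def)
qed

lemma src_wn:
  assumes ds: "distinct s" and k: "1 \<le> k"
  shows "src k (wn k i s) = wn (k-1) i s"
proof -
  have I: "{0..<k-1} = {0..<0 + (k-1)}" by simp
  have dT: "distinct (take k (drop i s))" using ds by simp
  have "std (take (k-1) (drop 0 (std (take k (drop i s))))) = std (take (k-1) (drop 0 (take k (drop i s))))"
    by (rule std_sub[OF dT])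
  then have e1: "std (take (k-1) (std (take k (drop i s)))) = std (take (k-1) (drop i s))"
    using k by (simp add: min_def)
  have e2: "take (k-1) (take k (drop i (ritmo s))) = take (k-1) (drop i (ritmo s))"
    using k by (simp add: min_def)
  show ?thesis unfolding src_def be_def I
    unfolding cpat_def pat_def nths_interval
    using e1 e2 by (simp add: wn_def)
qed

lemma en_S:
  assumes "k \<le> length s" shows "en k (S s) = wn k (length s - k) s"
proof -
  have "{length s - k..<length s} = {length s - k..<(length s - k) + k}" using assms by simp
  then show ?thesis unfolding en_def using cpat_S by (simp add: S_def)
qed

lemma Av_iff: "s \<in> Av t \<longleftrightarrow> is_perm s \<and> 1 \<le> length s \<and> avoids s t"
  unfolding Av_def Av_m_def by auto

lemma dchain_std:
  assumes dW: "distinct W" and c: "dchain (std W) is" shows "dchain W is"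
proof -
  have s1: "sorted_wrt (<) is" and b: "\<forall>i\<in>set is. i < length W"
    and s2: "sorted_wrt (\<lambda>a b. b < a) (map ((!) (std W)) is)" using c unfolding dchain_def by auto
  have "sorted_wrt (\<lambda>a b. b < a) (map ((!) W) is)"
  proof (rule sorted_wrt_iff_nth_less[THEN iffD2], intro allI impI)
    fix p q assume pq: "p < q" "q < length (map ((!) W) is)"
    have bq: "is!q < length W" "is!p < length W" using b pq by auto
    have "std W ! (is!q) < std W ! (is!p)" using sorted_wrt_nth_less[OF s2, of p q] pq by simp
    then show "map ((!) W) is ! q < map ((!) W) is ! p" using std_less[OF dW bq] pq by simp
  qed
  then show ?thesis using s1 b unfolding dchain_def by simp
qed

lemma dchain_shift:
  assumes c: "dchain (take k (drop i s)) is" shows "dchain s (map ((+) i) is)"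
proof -
  have s1: "sorted_wrt (<) is" and b: "\<forall>j\<in>set is. j < length (take k (drop i s))"
    and s2: "sorted_wrt (\<lambda>a b. b < a) (map ((!) (take k (drop i s))) is)" using c unfolding dchain_def by auto
  have b2: "\<forall>j\<in>set is. i + j < length s \<and> j < k" using b by auto
  have eqm: "map ((!) (take k (drop i s))) is = map ((!) s) (map ((+) i) is)"
  proof (rule nth_equalityI)
    show "length (map ((!) (take k (drop i s))) is) = length (map ((!) s) (map ((+) i) is))" by simp
    fix p assume "p < length (map ((!) (take k (drop i s))) is)"
    then have p: "p < length is" by simp
    then have "is!p \<in> set is" by simp
    then have "i + is!p < length s" "is!p < k" using b2 by auto
    then show "map ((!) (take k (drop i s))) is ! p = map ((!) s) (map ((+) i) is) ! p" using p by simp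
  qed
  have "sorted_wrt (\<lambda>a b. b < a) (map ((!) s) (map ((+) i) is))" using s2 unfolding eqm .
  moreover have "sorted_wrt (<) (map ((+) i) is)" using s1 by (simp add: sorted_wrt_map)
  ultimately show ?thesis using b2 unfolding dchain_def by auto
qed

lemma wn_inherited:
  assumes sA: "s \<in> Av (decr n)" and ik: "i + k \<le> length s" and k: "1 \<le> k" and n: "2 \<le> n"
  shows "wn k i s \<in> inherited n k"
proof -
  have ps: "is_perm s" and av: "avoids s (decr n)" using sA Av_iff by auto
  have ds: "distinct s" using ps is_perm_def by auto
  have gs: "good s (ritmo s)" using good_ritmo[OF ds] .
  have cs: "\<forall>i<length s. ritmo s ! i < n" using avoids_col[OF ds gs] av n by simp
  define T where "T = take (i+k) s"
  define r where "r = std T"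
  have dT: "distinct T" unfolding T_def using ds by simp
  have lT: "length T = i + k" unfolding T_def using ik by simp
  have pr: "is_perm r" unfolding r_def using perm_std[OF dT] .
  have dr: "distinct r" using pr is_perm_def by auto
  have lr: "length r = i + k" unfolding r_def using lT by simp
  have gT: "good T (take (i+k) (ritmo s))" unfolding T_def by (rule good_take[OF gs])
  have gr: "good r (take (i+k) (ritmo s))"
    using gT good_oiso[of r T] std_less[OF dT] unfolding r_def by simp
  have rr: "ritmo r = take (i+k) (ritmo s)" using ritmo_eq[OF dr gr] .
  have avr: "avoids r (decr n)"
  proof -
    have "\<forall>j<length r. take (i+k) (ritmo s) ! j < n" using cs lr ik by simp
    then show ?thesis using avoids_col[OF dr gr] n by simp
  qed
  have rA: "r \<in> Av (decr n)" using pr avr lr k Av_iff by auto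
  have ek: "en k (S r) = wn k i s"
  proof -
    have "en k (S r) = wn k i r" using en_S[of k r] lr by simp
    also have "\<dots> = wn k i s"
    proof -
      have "std (take k (drop i (std T))) = std (take k (drop i T))" by (rule std_sub[OF dT])
      also have "take k (drop i T) = take k (drop i s)" unfolding T_def by (simp add: take_drop add.commute)
      finally have "std (take k (drop i r)) = std (take k (drop i s))" unfolding r_def .
      moreover have "take k (drop i (ritmo r)) = take k (drop i (ritmo s))"
        unfolding rr by (simp add: take_drop add.commute)
      ultimately show ?thesis unfolding wn_def by simp
    qed
    finally show ?thesis .
  qed
  define W where "W = take k (drop i s)"
  have dW: "distinct W" unfolding W_def using ds by simp
  have lW: "length W = k" unfolding W_def using ik by simp
  have fst_in: "std W \<in> Av_m k (decr n)"
  proof -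
    have "avoids (std W) (decr n)"
    proof (rule avoids_chain[OF distinct_std[OF dW], THEN iffD2], rule notI)
      assume "\<exists>is. dchain (std W) is \<and> length is = n"
      then obtain "is" where c: "dchain (std W) is" "length is = n" by blast
      have "dchain s (map ((+) i) is)" using dchain_shift dchain_std[OF dW c(1)] unfolding W_def by blast
      then show False using av avoids_chain[OF ds] c(2) by auto
    qed
    then show ?thesis unfolding Av_m_def using perm_std[OF dW] lW by simp
  qed
  show ?thesis unfolding inherited_def
  proof (intro CollectI conjI)
    show "fst (wn k i s) \<in> Av_m k (decr n)" using fst_in unfolding wn_def W_def by simp
    show "\<exists>\<sigma>\<in>Av (decr n). k \<le> length \<sigma> \<and> en k (S \<sigma>) = wn k i s"
      using rA lr ek by (intro bexI[of _ r]) simp_all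
  qed
qed



lemma perm_distinct: "is_perm s \<Longrightarrow> distinct s" by (simp add: is_perm_def)

lemma perm_range: "is_perm s \<Longrightarrow> j < length s \<Longrightarrow> 1 \<le> s!j \<and> s!j \<le> length s"
proof -
  assume "is_perm s" "j < length s"
  then have "s!j \<in> {1..length s}" unfolding is_perm_def by (metis nth_mem)
  then show ?thesis by simp
qed

lemma edge_props:
  assumes e: "(pi, c) \<in> inherited n k" and k: "1 \<le> k" and n: "2 \<le> n"
  shows "is_perm pi \<and> length pi = k \<and> length c = k \<and> (\<forall>q<k. 1 \<le> c!q \<and> c!q < n) \<and>
    (\<forall>q<k-1. pi!(k-1) < pi!q \<longrightarrow> c!q < c!(k-1)) \<and>
    (2 \<le> c!(k-1) \<longrightarrow> (\<exists>q<k-1. pi!(k-1) < pi!q \<and> c!q = c!(k-1) - 1) \<or>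
       (\<exists>q<k-1. pi!q + 1 = pi!(k-1) \<and> c!(k-1) \<le> c!q) \<or> pi!(k-1) = 1)"
proof -
  have piA: "pi \<in> Av_m k (decr n)" using e unfolding inherited_def by simp
  then have ppi: "is_perm pi" and lpi: "length pi = k" unfolding Av_m_def by auto
  obtain r where rA: "r \<in> Av (decr n)" and kr: "k \<le> length r" and en: "en k (S r) = (pi, c)"
    using e unfolding inherited_def by auto
  have pr: "is_perm r" and avr: "avoids r (decr n)" using rA Av_iff by auto
  have dr: "distinct r" using pr perm_distinct by simp
  have gr: "good r (ritmo r)" using good_ritmo[OF dr] .
  have cr: "\<forall>i<length r. ritmo r ! i < n" using avoids_col[OF dr gr] avr n by simp
  define L where "L = length r"
  define ofs where "ofs = L - k"
  define T where "T = take k (drop ofs r)"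
  have we: "wn k ofs r = (pi, c)" using en en_S[OF kr] unfolding ofs_def L_def by simp
  have piT: "pi = std T" and cc: "c = take k (drop ofs (ritmo r))" using we unfolding wn_def T_def by auto
  have lT: "length T = k" unfolding T_def ofs_def L_def using kr by simp
  have dT: "distinct T" unfolding T_def using dr by simp
  have Tn: "\<And>q. q < k \<Longrightarrow> T!q = r!(ofs+q)" unfolding T_def ofs_def L_def using kr by simp
  have cn: "\<And>q. q < k \<Longrightarrow> c!q = ritmo r!(ofs+q)" unfolding cc ofs_def L_def using kr dr by simp
  have lc: "length c = k" unfolding cc ofs_def L_def using kr dr by simp
  have ol: "\<And>q. q < k \<Longrightarrow> ofs + q < L" unfolding ofs_def L_def using kr by simp
  have ord: "\<And>p q. p < k \<Longrightarrow> q < k \<Longrightarrow> (pi!p < pi!q) = (r!(ofs+p) < r!(ofs+q))"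
    using std_less[OF dT] lT Tn piT by simp
  have P0: "\<forall>q<k. 1 \<le> c!q \<and> c!q < n"
    using cn good_pos[OF gr] cr ol unfolding L_def by simp
  have P1: "\<forall>q<k-1. pi!(k-1) < pi!q \<longrightarrow> c!q < c!(k-1)"
  proof (intro allI impI)
    fix q assume q: "q < k-1" "pi!(k-1) < pi!q"
    have "r!(ofs+(k-1)) < r!(ofs+q)" using ord[of "k-1" q] q k by simp
    then have "ritmo r ! (ofs+q) < ritmo r ! (ofs+(k-1))"
      using good_less[OF gr, of "ofs+q" "ofs+(k-1)"] q ol[of "k-1"] k unfolding L_def by simp
    then show "c!q < c!(k-1)" using cn q k by simp
  qed
  have P2: "2 \<le> c!(k-1) \<longrightarrow> (\<exists>q<k-1. pi!(k-1) < pi!q \<and> c!q = c!(k-1) - 1) \<or>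
       (\<exists>q<k-1. pi!q + 1 = pi!(k-1) \<and> c!(k-1) \<le> c!q) \<or> pi!(k-1) = 1"
  proof
    assume c2: "2 \<le> c!(k-1)"
    define x where "x = ofs + (k-1)"
    have xl: "x < length r" using ol[of "k-1"] k unfolding x_def L_def by simp
    have cx: "c!(k-1) = ritmo r ! x" using cn k unfolding x_def by simp
    have w1: "1 \<le> c!(k-1) - 1" "c!(k-1) - 1 < ritmo r ! x" using c2 cx by simp_all
    obtain j where j: "j < x" "r!x < r!j" "ritmo r ! j = c!(k-1) - 1"
      using good_wit[OF gr xl w1] by blast
    show "(\<exists>q<k-1. pi!(k-1) < pi!q \<and> c!q = c!(k-1) - 1) \<or>
       (\<exists>q<k-1. pi!q + 1 = pi!(k-1) \<and> c!(k-1) \<le> c!q) \<or> pi!(k-1) = 1"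
    proof (cases "ofs \<le> j")
      case True
      define q where "q = j - ofs"
      have q: "q < k-1" "j = ofs + q" using True j(1) unfolding q_def x_def by auto
      have "pi!(k-1) < pi!q" using ord[of "k-1" q] q j(2) k unfolding x_def by simp
      moreover have "c!q = c!(k-1) - 1" using cn[of q] q j(3) by simp
      ultimately show ?thesis using q by blast
    next
      case False
      show ?thesis
      proof (cases "pi!(k-1) = 1")
        case False
        note nz = False
        have "pi!(k-1) \<in> {1..k}" using ppi lpi k unfolding is_perm_def by (metis diff_less nth_mem zero_less_one less_le_trans)
        then have "pi!(k-1) - 1 \<in> set pi" using nz ppi lpi unfolding is_perm_def by auto
        then obtain q where q: "q < k" "pi!q = pi!(k-1) - 1" using lpi by (metis in_set_conv_nth)
        have qk: "q \<noteq> k-1" using q nz \<open>pi!(k-1) \<in> {1..k}\<close> by auto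
        then have q1: "q < k-1" using q by simp
        have "pi!q < pi!(k-1)" using q nz \<open>pi!(k-1) \<in> {1..k}\<close> by simp
        then have "r!(ofs+q) < r!x" using ord[of q "k-1"] q k unfolding x_def by simp
        then have "r!(ofs+q) < r!j" using j(2) by simp
        moreover have "j < ofs + q" using \<open>\<not> ofs \<le> j\<close> by simp
        ultimately have "ritmo r ! j < ritmo r ! (ofs+q)"
          using good_less[OF gr] ol[OF q(1)] unfolding L_def by simp
        then have "c!(k-1) \<le> c!q" using cn[OF q(1)] j(3) c2 by simp
        moreover have "pi!q + 1 = pi!(k-1)" using q \<open>pi!(k-1) \<in> {1..k}\<close> nz by simp
        ultimately show ?thesis using q1 by blast
      qed simp
    qed
  qed
  show ?thesis using ppi lpi lc P0 P1 P2 by blast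
qed



definition sh :: "nat \<Rightarrow> nat \<Rightarrow> nat" where "sh v y = (if v \<le> y then Suc y else y)"

lemma sh_less[simp]: "(sh v x < sh v y) = (x < y)"
  unfolding sh_def by auto

lemma sh_inj: "sh v x = sh v y \<longleftrightarrow> x = y"
  unfolding sh_def by auto

lemma perm_ext:
  assumes p: "is_perm s" and v: "1 \<le> v" "v \<le> Suc (length s)"
  shows "is_perm (map (sh v) s @ [v])"
proof -
  have ds: "distinct s" using p perm_distinct by simp
  have d1: "distinct (map (sh v) s)" using ds by (simp add: distinct_map inj_on_def sh_inj)
  have nv: "v \<notin> set (map (sh v) s)" unfolding sh_def by auto
  have dd: "distinct (map (sh v) s @ [v])" using d1 nv by simp
  have sub: "set (map (sh v) s @ [v]) \<subseteq> {1..length (map (sh v) s @ [v])}"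
  proof
    fix y assume "y \<in> set (map (sh v) s @ [v])"
    then have "y = v \<or> (\<exists>x\<in>set s. y = sh v x)" by auto
    then show "y \<in> {1..length (map (sh v) s @ [v])}"
    proof
      assume "y = v" then show ?thesis using v by simp
    next
      assume "\<exists>x\<in>set s. y = sh v x"
      then obtain x where x: "x \<in> set s" "y = sh v x" by blast
      then have "x \<in> {1..length s}" using p unfolding is_perm_def by simp
      then show ?thesis using x unfolding sh_def by auto
    qed
  qed
  have "card (set (map (sh v) s @ [v])) = length (map (sh v) s @ [v])" by (rule distinct_card[OF dd])
  then have "set (map (sh v) s @ [v]) = {1..length (map (sh v) s @ [v])}" using sub by (simp add: card_subset_eq)
  then show ?thesis using dd unfolding is_perm_def by simp
qed

lemma max_true:
  assumes "a \<le> (b::nat)" "P a"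
  shows "\<exists>v. a \<le> v \<and> v \<le> b \<and> P v \<and> (v < b \<longrightarrow> \<not> P (Suc v))"
proof -
  define X where "X = {v. a \<le> v \<and> v \<le> b \<and> P v}"
  have fX: "finite X" unfolding X_def by simp
  have aX: "a \<in> X" using assms unfolding X_def by simp
  define v where "v = Max X"
  have vX: "v \<in> X" unfolding v_def using fX aX Max_in by blast
  have "v < b \<longrightarrow> \<not> P (Suc v)"
  proof (intro impI notI)
    assume "v < b" "P (Suc v)"
    then have "Suc v \<in> X" using vX unfolding X_def by simp
    then have "Suc v \<le> v" unfolding v_def using fX Max_ge by blast
    then show False by simp
  qed
  then show ?thesis using vX unfolding X_def by blast
qed

lemma choose_v:
  assumes g: "good s d" and ds: "distinct s" and ab: "a < b"
    and low: "\<forall>j<length s. b \<le> s!j \<longrightarrow> d!j < cn"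
    and up: "cn = 1 \<or> (\<exists>j<length s. a < s!j \<and> d!j = cn - 1)"
    and cn1: "1 \<le> cn"
  shows "\<exists>v. a < v \<and> v \<le> b \<and> {d!j | j. j < length s \<and> v \<le> s!j} = {1..<cn}"
proof -
  define P where "P = (\<lambda>v. cn = 1 \<or> (\<exists>j<length s. v \<le> s!j \<and> d!j = cn - 1))"
  have Pa: "P (Suc a)" using up unfolding P_def by (auto simp: Suc_le_eq)
  obtain v where v: "Suc a \<le> v" "v \<le> b" "P v" "v < b \<longrightarrow> \<not> P (Suc v)"
    using max_true[of "Suc a" b P] ab Pa by auto
  have sup: "{1..<cn} \<subseteq> {d!j | j. j < length s \<and> v \<le> s!j}"
  proof
    fix y assume y: "y \<in> {1..<cn}"
    then have "cn \<noteq> 1" by auto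
    then obtain j where j: "j < length s" "v \<le> s!j" "d!j = cn - 1" using v(3) unfolding P_def by blast
    show "y \<in> {d!j | j. j < length s \<and> v \<le> s!j}"
    proof (cases "y = cn - 1")
      case True then have "y = d!j \<and> j < length s \<and> v \<le> s!j" using j by simp
      then show ?thesis by blast
    next
      case False
      then have "y < d!j" "1 \<le> y" using y j by auto
      then obtain j' where "j' < j" "s!j < s!j'" "d!j' = y" using good_wit[OF g j(1)] by blast
      then show ?thesis using j by (intro CollectI exI[of _ j']) auto
    qed
  qed
  have sub: "{d!j | j. j < length s \<and> v \<le> s!j} \<subseteq> {1..<cn}"
  proof
    fix x assume "x \<in> {d!j | j. j < length s \<and> v \<le> s!j}"
    then obtain j where j: "x = d!j" "j < length s" "v \<le> s!j" by blast
    have "x < cn"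
    proof (rule ccontr)
      assume xc: "\<not> x < cn"
      show False
      proof (cases "v < b")
        case False
        then have "v = b" using v by simp
        then show False using low j xc by auto
      next
        case True
        then have nP: "\<not> P (Suc v)" using v by simp
        then have c1: "cn \<noteq> 1" and nj: "\<And>j'. j' < length s \<Longrightarrow> Suc v \<le> s!j' \<Longrightarrow> d!j' \<noteq> cn - 1"
          unfolding P_def by auto
        show False
        proof (cases "Suc v \<le> s!j")
          case True
          have "cn - 1 < d!j" "1 \<le> cn - 1" using xc j c1 cn1 by auto
          then obtain j' where "j' < j" "s!j < s!j'" "d!j' = cn - 1" using good_wit[OF g j(2)] by blast
          then show False using nj[of j'] True j by simp
        next
          case False
          then have sj: "s!j = v" using j by simp
          obtain j1 where j1: "j1 < length s" "v \<le> s!j1" "d!j1 = cn - 1" using v(3) c1 unfolding P_def by blast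
          show False
          proof (cases "s!j1 = v")
            case True
            then have "j1 = j" using sj ds j1 j by (metis nth_eq_iff_index_eq)
            then show False using j1 j xc c1 cn1 by simp
          next
            case False
            then show False using nj[of j1] j1 by simp
          qed
        qed
      qed
    qed
    moreover have "1 \<le> x" using good_pos[OF g j(2)] j by simp
    ultimately show "x \<in> {1..<cn}" by simp
  qed
  show ?thesis using sub sup v by (intro exI[of _ v]) auto
qed



lemma src_eq: "src k (pi, c) = (std (take (k-1) pi), take (k-1) c)"
  unfolding src_def be_def cpat_def pat_def by (simp add: atLeast0LessThan)

lemma wn_ext:
  assumes ds: "distinct s" and ik: "i + k \<le> length s"
    and r': "ritmo (map (sh v) s @ [v]) = ritmo s @ [cn]"
  shows "wn k i (map (sh v) s @ [v]) = wn k i s"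
proof -
  have l: "length (ritmo s) = length s" using ds by simp
  have t1: "take k (drop i (map (sh v) s @ [v])) = map (sh v) (take k (drop i s))"
    using ik by (simp add: take_map drop_map)
  have t2: "take k (drop i (ritmo s @ [cn])) = take k (drop i (ritmo s))"
    using ik l by simp
  have "std (map (sh v) (take k (drop i s))) = std (take k (drop i s))"
    by (rule std_ordiso) (use ds in \<open>simp_all add: distinct_map inj_on_def sh_inj\<close>)
  then show ?thesis unfolding wn_def r' t1 t2 by simp
qed

lemma extend:
  fixes s pi c :: "nat list"
  assumes sA: "s \<in> Av (decr n)" and n: "2 \<le> n" and k: "1 \<le> k" and ks: "k \<le> length s"
    and cov: "\<forall>x. 1 \<le> x \<and> x \<le> n - 2 \<longrightarrow> x \<in> set (ritmo s)"
    and e: "(pi, c) \<in> inherited n k"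
    and conn: "wn (k-1) (Suc (length s - k)) s = src k (pi, c)"
  shows "\<exists>s'. s' \<in> Av (decr n) \<and> length s' = Suc (length s) \<and>
     (\<forall>x. 1 \<le> x \<and> x \<le> n - 2 \<longrightarrow> x \<in> set (ritmo s')) \<and>
     coloured_walk k s' = coloured_walk k s @ [(pi, c)]"
proof -
  have ps: "is_perm s" and av: "avoids s (decr n)" using sA Av_iff by auto
  have ds: "distinct s" using ps perm_distinct by simp
  define m where "m = length s"
  define d where "d = ritmo s"
  have gs: "good s d" unfolding d_def using good_ritmo[OF ds] .
  have ld: "length d = m" unfolding d_def m_def using ds by simp
  have cs: "\<forall>i<m. d!i < n" using avoids_col[OF ds gs] av n unfolding m_def by simp
  have EP: "is_perm pi \<and> length pi = k \<and> length c = k \<and> (\<forall>q<k. 1 \<le> c!q \<and> c!q < n) \<and>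
    (\<forall>q<k-1. pi!(k-1) < pi!q \<longrightarrow> c!q < c!(k-1)) \<and>
    (2 \<le> c!(k-1) \<longrightarrow> (\<exists>q<k-1. pi!(k-1) < pi!q \<and> c!q = c!(k-1) - 1) \<or>
       (\<exists>q<k-1. pi!q + 1 = pi!(k-1) \<and> c!(k-1) \<le> c!q) \<or> pi!(k-1) = 1)"
    using edge_props[OF e k n] .
  have ppi: "is_perm pi" and lpi: "length pi = k" and lc: "length c = k"
    and P0: "\<forall>q<k. 1 \<le> c!q \<and> c!q < n"
    and P1: "\<forall>q<k-1. pi!(k-1) < pi!q \<longrightarrow> c!q < c!(k-1)"
    and P2: "2 \<le> c!(k-1) \<longrightarrow> (\<exists>q<k-1. pi!(k-1) < pi!q \<and> c!q = c!(k-1) - 1) \<or>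
       (\<exists>q<k-1. pi!q + 1 = pi!(k-1) \<and> c!(k-1) \<le> c!q) \<or> pi!(k-1) = 1"
    using EP by blast+
  have dpi: "distinct pi" using ppi perm_distinct by simp
  define ofs where "ofs = Suc (m - k)"
  have ofsk: "ofs + (k-1) = m" unfolding ofs_def m_def using ks k by simp
  define W where "W = drop ofs s"
  have lW: "length W = k - 1" unfolding W_def using ofsk unfolding m_def by simp
  have tW: "take (k-1) (drop ofs s) = W" using lW unfolding W_def by simp
  have c1: "std W = std (take (k-1) pi)" and c2: "take (k-1) (drop ofs d) = take (k-1) c"
    using conn unfolding src_eq wn_def tW[symmetric] ofs_def d_def m_def by simp_all
  have Wn: "\<And>q. q < k-1 \<Longrightarrow> W!q = s!(ofs+q)" unfolding W_def using ofsk unfolding m_def by simp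
  have dq: "\<And>q. q < k-1 \<Longrightarrow> d!(ofs+q) = c!q"
  proof -
    fix q assume q: "q < k-1"
    have "take (k-1) (drop ofs d) ! q = take (k-1) c ! q" using c2 by simp
    then show "d!(ofs+q) = c!q" using q ofsk ld by simp
  qed
  have dW: "distinct W" unfolding W_def using ds by simp
  have dpk: "distinct (take (k-1) pi)" using dpi by simp
  have ordW: "\<And>q q'. q < k-1 \<Longrightarrow> q' < k-1 \<Longrightarrow> (W!q < W!q') = (pi!q < pi!q')"
  proof -
    fix q q' assume q: "q < k-1" "q' < k-1"
    have "(W!q < W!q') = (std W!q < std W!q')" using std_less[OF dW] q lW by simp
    also have "\<dots> = (std (take (k-1) pi) ! q < std (take (k-1) pi) ! q')" using c1 by simp
    also have "\<dots> = (take (k-1) pi ! q < take (k-1) pi ! q')" using std_less[OF dpk] q lpi by simp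
    also have "\<dots> = (pi!q < pi!q')" using q by simp
    finally show "(W!q < W!q') = (pi!q < pi!q')" .
  qed
  define pk where "pk = pi!(k-1)"
  define cn where "cn = c!(k-1)"
  have pne: "\<And>q. q < k-1 \<Longrightarrow> pi!q \<noteq> pk"
  proof -
    fix q assume q: "q < k-1"
    then have "q \<noteq> k-1" "q < length pi" "k-1 < length pi" using lpi k by auto
    then show "pi!q \<noteq> pk" unfolding pk_def using dpi by (simp add: nth_eq_iff_index_eq)
  qed
  have Wr: "\<And>q. q < k-1 \<Longrightarrow> 1 \<le> W!q \<and> W!q \<le> m"
  proof -
    fix q assume q: "q < k-1"
    then have "ofs + q < length s" using ofsk unfolding m_def by simp
    then show "1 \<le> W!q \<and> W!q \<le> m" using perm_range[OF ps] Wn[OF q] unfolding m_def by simp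
  qed
  define lo where "lo = {q. q < k-1 \<and> pi!q < pk}"
  define hi where "hi = {q. q < k-1 \<and> pk < pi!q}"
  define a where "a = Max (insert 0 ((\<lambda>q. W!q) ` lo))"
  define b where "b = Min (insert (Suc m) ((\<lambda>q. W!q) ` hi))"
  have flo: "finite lo" unfolding lo_def by simp
  have fhi: "finite hi" unfolding hi_def by simp
  have a_ge: "\<And>q. q \<in> lo \<Longrightarrow> W!q \<le> a" unfolding a_def using flo by simp
  have a_cases: "a = 0 \<or> (\<exists>q\<in>lo. a = W!q)"
  proof -
    have "a \<in> insert 0 ((\<lambda>q. W!q) ` lo)" unfolding a_def using flo by (intro Max_in) simp_all
    then show ?thesis by auto
  qed
  have b_le: "\<And>q. q \<in> hi \<Longrightarrow> b \<le> W!q" unfolding b_def using fhi by simp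
  have b_cases: "b = Suc m \<or> (\<exists>q\<in>hi. b = W!q)"
  proof -
    have "b \<in> insert (Suc m) ((\<lambda>q. W!q) ` hi)" unfolding b_def using fhi by (intro Min_in) simp_all
    then show ?thesis by auto
  qed
  have bm: "b \<le> Suc m" unfolding b_def using fhi by simp
  have ab: "a < b"
  proof -
    have "\<not> b \<le> a"
    proof
      assume ba: "b \<le> a"
      from a_cases show False
      proof
        assume "a = 0"
        from b_cases show False
        proof
          assume "b = Suc m" then show False using ba \<open>a = 0\<close> by simp
        next
          assume "\<exists>q\<in>hi. b = W!q"
          then obtain q where "q \<in> hi" "b = W!q" by blast
          then show False using Wr[of q] ba \<open>a = 0\<close> unfolding hi_def by simp
        qed
      next
        assume "\<exists>q\<in>lo. a = W!q"
        then obtain q1 where q1: "q1 \<in> lo" "a = W!q1" by blast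
        from b_cases show False
        proof
          assume "b = Suc m" then show False using ba q1 Wr[of q1] unfolding lo_def by simp
        next
          assume "\<exists>q\<in>hi. b = W!q"
          then obtain q2 where q2: "q2 \<in> hi" "b = W!q2" by blast
          have "pi!q1 < pi!q2" using q1 q2 unfolding lo_def hi_def by simp
          then have "W!q1 < W!q2" using ordW q1 q2 unfolding lo_def hi_def by simp
          then show False using ba q1 q2 by simp
        qed
      qed
    qed
    then show ?thesis by simp
  qed
  have low: "\<forall>j<m. b \<le> s!j \<longrightarrow> d!j < cn"
  proof (intro allI impI)
    fix j assume j: "j < m" "b \<le> s!j"
    show "d!j < cn"
    proof (cases "ofs \<le> j")
      case True
      define q where "q = j - ofs"
      have q: "q < k-1" "j = ofs + q" using True j ofsk unfolding q_def by auto
      have Wq: "W!q = s!j" using Wn[OF q(1)] q by simp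
      have "q \<notin> lo"
      proof
        assume "q \<in> lo" then have "W!q \<le> a" using a_ge by simp
        then show False using Wq j ab by simp
      qed
      then have "pk < pi!q" using pne[OF q(1)] q unfolding lo_def by auto
      then have "c!q < cn" using P1 q unfolding pk_def cn_def by simp
      then show ?thesis using dq[OF q(1)] q by simp
    next
      case False
      from b_cases show ?thesis
      proof
        assume "b = Suc m"
        then show ?thesis using j perm_range[OF ps, of j] unfolding m_def by simp
      next
        assume "\<exists>q\<in>hi. b = W!q"
        then obtain qb where qb: "qb \<in> hi" "b = W!qb" by blast
        have qb1: "qb < k-1" using qb unfolding hi_def by simp
        have jl: "j < ofs + qb" using False by simp
        have ol: "ofs + qb < length s" using qb1 ofsk unfolding m_def by simp
        have "s!(ofs+qb) \<noteq> s!j" using ds jl ol j unfolding m_def by (simp add: nth_eq_iff_index_eq)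
        then have "s!(ofs+qb) < s!j" using j qb Wn[OF qb1] by simp
        then have "d!j < d!(ofs+qb)" using good_less[OF gs jl ol] by simp
        moreover have "c!qb < cn" using P1 qb unfolding hi_def pk_def cn_def by simp
        ultimately show ?thesis using dq[OF qb1] by simp
      qed
    qed
  qed
  have cn1: "1 \<le> cn" "cn < n" using P0 k unfolding cn_def by auto
  have up: "cn = 1 \<or> (\<exists>j<m. a < s!j \<and> d!j = cn - 1)"
  proof (cases "cn = 1")
    case False
    then have c2': "2 \<le> c!(k-1)" using cn1 unfolding cn_def by simp
    have "(\<exists>q<k-1. pi!(k-1) < pi!q \<and> c!q = c!(k-1) - 1) \<or>
       (\<exists>q<k-1. pi!q + 1 = pi!(k-1) \<and> c!(k-1) \<le> c!q) \<or> pi!(k-1) = 1" using P2 c2' by simp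
    then have "\<exists>j<m. a < s!j \<and> d!j = cn - 1"
    proof (elim disjE)
      assume "\<exists>q<k-1. pi!(k-1) < pi!q \<and> c!q = c!(k-1) - 1"
      then obtain q where q: "q < k-1" "pk < pi!q" "c!q = cn - 1" unfolding pk_def cn_def by blast
      then have "q \<in> hi" unfolding hi_def by simp
      then have "a < W!q" using b_le ab by (meson order_less_le_trans)
      moreover have "ofs + q < m" using q ofsk by simp
      ultimately show ?thesis using Wn[OF q(1)] dq[OF q(1)] q(3) by auto
    next
      assume "\<exists>q<k-1. pi!q + 1 = pi!(k-1) \<and> c!(k-1) \<le> c!q"
      then obtain q where q: "q < k-1" "pi!q + 1 = pk" "cn \<le> c!q" unfolding pk_def cn_def by blast
      then have qlo: "q \<in> lo" unfolding lo_def by simp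
      have "a = W!q"
      proof -
        have "W!q \<le> a" using a_ge[OF qlo] .
        moreover have "a \<le> W!q"
        proof -
          from a_cases show ?thesis
          proof
            assume "\<exists>q'\<in>lo. a = W!q'"
            then obtain q' where q': "q' \<in> lo" "a = W!q'" by blast
            have q'1: "q' < k-1" "pi!q' < pk" using q' unfolding lo_def by auto
            show ?thesis
            proof (cases "q' = q")
              case False
              then have "pi!q' \<noteq> pi!q" using dpi q'1 q lpi by (simp add: nth_eq_iff_index_eq)
              then have "pi!q' < pi!q" using q'1 q by simp
              then show ?thesis using ordW[OF q'1(1) q(1)] q' by simp
            qed (use q' in simp)
          qed simp
        qed
        ultimately show ?thesis by simp
      qed
      have ol: "ofs + q < length s" using q ofsk unfolding m_def by simp
      have w1: "1 \<le> cn - 1" "cn - 1 < d!(ofs+q)" using False cn1 q dq[OF q(1)] by auto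
      obtain j where j: "j < ofs + q" "s!(ofs+q) < s!j" "d!j = cn - 1" using good_wit[OF gs ol w1] by blast
      have "a < s!j" using j \<open>a = W!q\<close> Wn[OF q(1)] by simp
      then show ?thesis using j ol unfolding m_def by (intro exI[of _ j]) simp
    next
      assume p1: "pi!(k-1) = 1"
      have "lo = {}"
      proof -
        have "\<And>q. q < k-1 \<Longrightarrow> 1 \<le> pi!q"
        proof -
          fix q assume "q < k-1"
          then have "pi!q \<in> set pi" using lpi by simp
          then show "1 \<le> pi!q" using ppi unfolding is_perm_def by auto
        qed
        then show ?thesis unfolding lo_def pk_def using p1 by fastforce
      qed
      then have a0: "a = 0" unfolding a_def by simp
      have "1 \<le> cn - 1 \<and> cn - 1 \<le> n - 2" using cn1 False by arith
      then have "cn - 1 \<in> set d" using cov unfolding d_def by blast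
      then obtain j where j: "j < m" "d!j = cn - 1" using ld by (metis in_set_conv_nth)
      have "1 \<le> s!j" using perm_range[OF ps] j unfolding m_def by simp
      then show ?thesis using j a0 by auto
    qed
    then show ?thesis by simp
  qed simp
  obtain v where v: "a < v" "v \<le> b" and Ev: "{d!j | j. j < length s \<and> v \<le> s!j} = {1..<cn}"
    using choose_v[OF gs ds ab _ _ cn1(1)] low up unfolding m_def by blast
  have v1: "1 \<le> v" "v \<le> Suc (length s)" using v bm unfolding m_def by simp_all
  define s' where "s' = map (sh v) s @ [v]"
  have ps': "is_perm s'" unfolding s'_def using perm_ext[OF ps v1] .
  have ds': "distinct s'" using ps' perm_distinct by simp
  have g1: "good (map (sh v) s) d" using gs good_oiso[of "map (sh v) s" s d] by simp
  have E': "{d!j | j. j < length (map (sh v) s) \<and> v < map (sh v) s ! j} = {1..<cn}"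
  proof -
    have "{d!j | j. j < length (map (sh v) s) \<and> v < map (sh v) s ! j} = {d!j | j. j < length s \<and> v \<le> s!j}"
    proof (rule setcompr_cong2)
      fix j show "(j < length (map (sh v) s) \<and> v < map (sh v) s ! j) = (j < length s \<and> v \<le> s!j)"
        unfolding sh_def by (cases "j < length s") auto
    qed
    then show ?thesis using Ev by simp
  qed
  have g': "good s' (d @ [cn])" unfolding s'_def using good_snoc[OF g1 cn1(1) E'] .
  have r': "ritmo s' = d @ [cn]" using ritmo_eq[OF ds' g'] .
  have ls': "length s' = Suc m" unfolding s'_def m_def by simp
  have av': "avoids s' (decr n)"
  proof -
    have "\<forall>i<length s'. (d @ [cn]) ! i < n"
    proof (intro allI impI)
      fix i assume "i < length s'"
      then have "i < m \<or> i = m" using ls' by auto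
      then show "(d @ [cn]) ! i < n" using cs cn1 ld by (auto simp: nth_append)
    qed
    then show ?thesis using avoids_col[OF ds' g'] n by simp
  qed
  have sA': "s' \<in> Av (decr n)" using ps' av' ls' Av_iff by auto
  have cov': "\<forall>x. 1 \<le> x \<and> x \<le> n - 2 \<longrightarrow> x \<in> set (ritmo s')"
    using cov unfolding r' d_def by simp
  have side1: "\<And>q. q < k-1 \<Longrightarrow> (sh v (W!q) < v) = (pi!q < pk)"
  proof -
    fix q assume q: "q < k-1"
    show "(sh v (W!q) < v) = (pi!q < pk)"
    proof (cases "pi!q < pk")
      case True
      then have "W!q \<le> a" using a_ge q unfolding lo_def by simp
      then show ?thesis using True v unfolding sh_def by simp
    next
      case False
      then have "pk < pi!q" using pne[OF q] by simp
      then have "b \<le> W!q" using b_le q unfolding hi_def by simp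
      then show ?thesis using False v unfolding sh_def by simp
    qed
  qed
  have side2: "\<And>q. q < k-1 \<Longrightarrow> (v < sh v (W!q)) = (pk < pi!q)"
  proof -
    fix q assume q: "q < k-1"
    show "(v < sh v (W!q)) = (pk < pi!q)"
    proof (cases "pi!q < pk")
      case True
      then have "W!q \<le> a" using a_ge q unfolding lo_def by simp
      then show ?thesis using True v unfolding sh_def by simp
    next
      case False
      then have "pk < pi!q" using pne[OF q] by simp
      then have "b \<le> W!q" using b_le q unfolding hi_def by simp
      then show ?thesis using \<open>pk < pi!q\<close> v unfolding sh_def by simp
    qed
  qed
  define X where "X = map (sh v) W @ [v]"
  have lX: "length X = k" unfolding X_def using lW k by simp
  have tX: "take k (drop ofs s') = X"
  proof -
    have "drop ofs s' = X" unfolding s'_def X_def W_def using ofsk unfolding m_def by (simp add: drop_map)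
    then show ?thesis using lX by simp
  qed
  have dX: "distinct X" using ds' tX[symmetric] by (metis distinct_drop distinct_take)
  have Xn1: "\<And>q. q < k-1 \<Longrightarrow> X!q = sh v (W!q)" unfolding X_def using lW by (simp add: nth_append)
  have Xn2: "X!(k-1) = v" unfolding X_def using lW by (simp add: nth_append)
  have stdX: "std X = pi"
  proof -
    have "std X = std pi"
    proof (rule std_ordiso[OF dX dpi])
      show "length X = length pi" using lX lpi by simp
      fix p q assume pq: "p < length X" "q < length X"
      show "(X!p < X!q) = (pi!p < pi!q)"
      proof (cases "p < k-1")
        case True
        show ?thesis
        proof (cases "q < k-1")
          case True
          then show ?thesis using \<open>p < k-1\<close> Xn1 ordW by simp
        next
          case False
          then have "q = k-1" using pq lX by simp
          then show ?thesis using \<open>p < k-1\<close> Xn1 Xn2 side1 unfolding pk_def by simp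
        qed
      next
        case False
        then have pk1: "p = k-1" using pq lX by simp
        show ?thesis
        proof (cases "q < k-1")
          case True
          then show ?thesis using pk1 Xn1 Xn2 side2 unfolding pk_def by simp
        next
          case False
          then have "q = k-1" using pq lX by simp
          then show ?thesis using pk1 by simp
        qed
      qed
    qed
    then show ?thesis using std_perm[OF ppi] by simp
  qed
  have colX: "take k (drop ofs (d @ [cn])) = c"
  proof -
    have "drop ofs d = take (k-1) (drop ofs d)" using ld ofsk by simp
    then have "drop ofs d = take (k-1) c" using c2 by simp
    then have "take k (drop ofs (d @ [cn])) = take (k-1) c @ [cn]" using ld ofsk lc k by simp
    also have "\<dots> = c" unfolding cn_def using lc k by (metis Suc_diff_1 diff_less less_numeral_extra(1) less_le_trans take_Suc_conv_app_nth take_all order_refl)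
    finally show ?thesis .
  qed
  have lastw: "wn k ofs s' = (pi, c)" unfolding wn_def tX r' colX stdX by simp
  have same: "\<And>i. i + k \<le> length s \<Longrightarrow> wn k i s' = wn k i s"
    unfolding s'_def using wn_ext[OF ds] r' unfolding s'_def d_def by blast
  have "coloured_walk k s' = map (\<lambda>i. wn k i s') [0..<Suc ofs]"
    unfolding cw_eq ls' ofs_def using ks unfolding m_def by (simp add: Suc_diff_le)
  also have "\<dots> = map (\<lambda>i. wn k i s') [0..<ofs] @ [wn k ofs s']" by simp
  also have "map (\<lambda>i. wn k i s') [0..<ofs] = map (\<lambda>i. wn k i s) [0..<ofs]"
  proof (rule map_cong)
    fix i assume "i \<in> set [0..<ofs]"
    then have "i + k \<le> length s" unfolding ofs_def m_def using ks by auto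
    then show "wn k i s' = wn k i s" by (rule same)
  qed simp
  also have "map (\<lambda>i. wn k i s) [0..<ofs] = coloured_walk k s"
    unfolding cw_eq ofs_def m_def using ks by (simp add: Suc_diff_le)
  finally have "coloured_walk k s' = coloured_walk k s @ [(pi, c)]" using lastw by simp
  then show ?thesis using sA' ls' cov' unfolding m_def by blast
qed



lemma good_dec: "good (rev [1..<Suc m]) [1..<Suc m]"
proof -
  have l: "length (rev [1..<Suc m]) = m" by simp
  have Pn: "\<And>i. i < m \<Longrightarrow> rev [1..<Suc m] ! i = m - i" by (simp add: rev_nth del: upt_Suc)
  have Dn: "\<And>i. i < m \<Longrightarrow> [1..<Suc m] ! i = Suc i" by (simp del: upt_Suc)
  show ?thesis unfolding good_def
  proof (intro conjI allI impI)
    show "length [1..<Suc m] = length (rev [1..<Suc m])" by simp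
    fix i assume i: "i < length (rev [1..<Suc m])"
    then have i': "i < m" by (simp del: upt_Suc)
    show "1 \<le> [1..<Suc m] ! i" using Dn[OF i'] by simp
    have "{[1..<Suc m] ! j | j. j < i \<and> rev [1..<Suc m] ! i < rev [1..<Suc m] ! j} = {Suc j | j. j < i}"
    proof (rule setcompr_cong3)
      fix j
      show "(j < i \<and> rev [1..<Suc m] ! i < rev [1..<Suc m] ! j) = (j < i)"
        using Pn[of i] Pn[of j] i' by (cases "j < i") (auto simp del: upt_Suc)
      show "j < i \<and> rev [1..<Suc m] ! i < rev [1..<Suc m] ! j \<Longrightarrow> [1..<Suc m] ! j = Suc j"
        using Dn i' by simp
    qed
    also have "\<dots> = {1..<[1..<Suc m] ! i}"
    proof (rule set_eqI)
      fix x show "(x \<in> {Suc j | j. j < i}) = (x \<in> {1..<[1..<Suc m] ! i})"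
        using Dn[OF i'] by (cases x) auto
    qed
    finally show "{[1..<Suc m] ! j | j. j < i \<and> rev [1..<Suc m] ! i < rev [1..<Suc m] ! j} = {1..<[1..<Suc m] ! i}" .
  qed
qed

lemma initial:
  assumes rA: "r \<in> Av (decr n)" and kr: "k \<le> length r" and k: "1 \<le> k" and n: "2 \<le> n"
  shows "\<exists>s. s \<in> Av (decr n) \<and> length s = n - 2 + length r \<and> k \<le> length s \<and>
    (\<forall>x. 1 \<le> x \<and> x \<le> n - 2 \<longrightarrow> x \<in> set (ritmo s)) \<and> wn k (length s - k) s = en k (S r)"
proof -
  have pr: "is_perm r" and avr: "avoids r (decr n)" using rA Av_iff by auto
  have dr: "distinct r" using pr perm_distinct by simp
  have gr: "good r (ritmo r)" using good_ritmo[OF dr] .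
  have cr: "\<forall>i<length r. ritmo r ! i < n" using avoids_col[OF dr gr] avr n by simp
  define m where "m = n - 2"
  define P where "P = rev [1..<Suc m]"
  define dP where "dP = [1..<Suc m]"
  define Q where "Q = map (\<lambda>y. y + m) r"
  define s where "s = P @ Q"
  have gP: "good P dP" unfolding P_def dP_def by (rule good_dec)
  have gQ: "good Q (ritmo r)" unfolding Q_def using gr good_oiso[of "map (\<lambda>y. y + m) r" r] by simp
  have PQ: "\<And>a b. a \<in> set P \<Longrightarrow> b \<in> set Q \<Longrightarrow> a < b"
  proof -
    fix a b assume "a \<in> set P" "b \<in> set Q"
    then have "a \<le> m" "\<exists>y\<in>set r. b = y + m" unfolding P_def Q_def by auto
    moreover have "\<And>y. y \<in> set r \<Longrightarrow> 1 \<le> y" using pr unfolding is_perm_def by auto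
    ultimately show "a < b" by fastforce
  qed
  have gs: "good s (dP @ ritmo r)" unfolding s_def using good_app[OF gP gQ PQ] .
  have lP: "length P = m" unfolding P_def by simp
  have ls: "length s = m + length r" unfolding s_def Q_def using lP by simp
  have ds: "distinct s"
  proof -
    have "distinct P" unfolding P_def by simp
    moreover have "distinct Q" unfolding Q_def using dr by (simp add: distinct_map inj_on_def)
    moreover have "set P \<inter> set Q = {}" using PQ by fastforce
    ultimately show ?thesis unfolding s_def by simp
  qed
  have ps: "is_perm s"
  proof -
    have "set s \<subseteq> {1..length s}"
    proof
      fix x assume "x \<in> set s"
      then have "x \<in> set P \<or> x \<in> set Q" unfolding s_def by simp
      then show "x \<in> {1..length s}"
      proof
        assume "x \<in> set P" then show ?thesis unfolding P_def using ls by auto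
      next
        assume "x \<in> set Q"
        then obtain y where "y \<in> set r" "x = y + m" unfolding Q_def by auto
        moreover have "y \<in> {1..length r}" using \<open>y \<in> set r\<close> pr unfolding is_perm_def by simp
        ultimately show ?thesis using ls by simp
      qed
    qed
    moreover have "card (set s) = length s" by (rule distinct_card[OF ds])
    ultimately have "set s = {1..length s}" by (simp add: card_subset_eq)
    then show ?thesis using ds unfolding is_perm_def by simp
  qed
  have rs: "ritmo s = dP @ ritmo r" using ritmo_eq[OF ds gs] .
  have ldP: "length dP = m" unfolding dP_def by simp
  have avs: "avoids s (decr n)"
  proof -
    have "\<forall>i<length s. (dP @ ritmo r) ! i < n"
    proof (intro allI impI)
      fix i assume i: "i < length s"
      show "(dP @ ritmo r) ! i < n"
      proof (cases "i < m")
        case True then show ?thesis using ldP n unfolding dP_def m_def by (simp add: nth_append del: upt_Suc)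
      next
        case False then show ?thesis using cr i ls ldP by (simp add: nth_append)
      qed
    qed
    then show ?thesis using avoids_col[OF ds gs] n by simp
  qed
  have sA: "s \<in> Av (decr n)" using ps avs ls kr k Av_iff by auto
  have cov: "\<forall>x. 1 \<le> x \<and> x \<le> n - 2 \<longrightarrow> x \<in> set (ritmo s)"
    unfolding rs dP_def m_def by auto
  have w: "wn k (length s - k) s = en k (S r)"
  proof -
    have e1: "length s - k = m + (length r - k)" using ls kr by simp
    have t1: "take k (drop (length s - k) s) = map (\<lambda>y. y + m) (take k (drop (length r - k) r))"
      unfolding e1 s_def Q_def using lP kr by (simp add: take_map drop_map)
    have t2: "take k (drop (length s - k) (ritmo s)) = take k (drop (length r - k) (ritmo r))"
      unfolding e1 rs using ldP by simp
    have "std (map (\<lambda>y. y + m) (take k (drop (length r - k) r))) = std (take k (drop (length r - k) r))"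
      by (rule std_ordiso) (use dr in \<open>simp_all add: distinct_map inj_on_def\<close>)
    then show ?thesis unfolding en_S[OF kr] wn_def t1 t2 by simp
  qed
  show ?thesis using sA ls kr cov w unfolding m_def by (intro exI[of _ s]) simp
qed



lemma length_cw: "k \<le> length s \<Longrightarrow> length (coloured_walk k s) = length s - k + 1"
  unfolding cw_eq by simp

lemma last_cw: "k \<le> length s \<Longrightarrow> last (coloured_walk k s) = wn k (length s - k) s"
  unfolding cw_eq by (simp add: last_map)

lemma nth_cw: "k \<le> length s \<Longrightarrow> i < length s - k + 1 \<Longrightarrow> coloured_walk k s ! i = wn k i s"
  unfolding cw_eq by (simp del: upt_Suc)

lemma cw_walk:
  assumes sA: "s \<in> Av (decr n)" and k: "1 \<le> k" and ks: "k \<le> length s" and n: "2 \<le> n"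
  shows "is_walk k n (coloured_walk k s)"
proof -
  have ds: "distinct s" using sA Av_iff perm_distinct by auto
  have "set (coloured_walk k s) \<subseteq> ov_edges k n"
  proof
    fix e assume "e \<in> set (coloured_walk k s)"
    then have "e \<in> (\<lambda>i. wn k i s) ` set [0..<length s - k + 1]" unfolding cw_eq by (simp only: set_map)
    then obtain i where i0: "i \<in> set [0..<length s - k + 1]" "e = wn k i s" by blast
    then have i: "i < length s - k + 1" "e = wn k i s" by (simp_all del: upt_Suc)
    then have "i + k \<le> length s" using ks by simp
    then show "e \<in> ov_edges k n" unfolding ov_edges_def using wn_inherited[OF sA _ k n] i by simp
  qed
  moreover have "\<forall>i. Suc i < length (coloured_walk k s) \<longrightarrow>
      tgt k (coloured_walk k s ! i) = src k (coloured_walk k s ! Suc i)"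
  proof (intro allI impI)
    fix i assume i: "Suc i < length (coloured_walk k s)"
    then have i': "Suc i < length s - k + 1" using length_cw[OF ks] by simp
    then have "i + k \<le> length s" by simp
    then have "tgt k (wn k i s) = wn (k-1) (Suc i) s" using tgt_wn[OF ds k] by simp
    also have "\<dots> = src k (wn k (Suc i) s)" using src_wn[OF ds k] by simp
    finally show "tgt k (coloured_walk k s ! i) = src k (coloured_walk k s ! Suc i)"
      using nth_cw[OF ks] i' by simp
  qed
  ultimately show ?thesis unfolding is_walk_def by simp
qed

lemma iterate:
  assumes n: "2 \<le> n" and k: "1 \<le> k"
  shows "s \<in> Av (decr n) \<Longrightarrow> k \<le> length s \<Longrightarrow> (\<forall>x. 1 \<le> x \<and> x \<le> n - 2 \<longrightarrow> x \<in> set (ritmo s)) \<Longrightarrow>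
    set w \<subseteq> inherited n k \<Longrightarrow> (\<forall>i. Suc i < length w \<longrightarrow> tgt k (w!i) = src k (w!Suc i)) \<Longrightarrow>
    (w \<noteq> [] \<longrightarrow> tgt k (wn k (length s - k) s) = src k (hd w)) \<Longrightarrow>
    \<exists>s'. s' \<in> Av (decr n) \<and> length s' = length s + length w \<and> coloured_walk k s' = coloured_walk k s @ w"
proof (induction w arbitrary: s)
  case Nil then show ?case by auto
next
  case (Cons e w)
  obtain pi c where e: "e = (pi, c)" by (cases e)
  have ds: "distinct s" using Cons.prems(1) Av_iff perm_distinct by auto
  have conn: "wn (k-1) (Suc (length s - k)) s = src k (pi, c)"
    using Cons.prems(6) tgt_wn[OF ds k, of "length s - k"] Cons.prems(2) e by simp
  have ein: "(pi, c) \<in> inherited n k" using Cons.prems(4) e by simp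
  obtain s1 where s1: "s1 \<in> Av (decr n)" "length s1 = Suc (length s)"
    "\<forall>x. 1 \<le> x \<and> x \<le> n - 2 \<longrightarrow> x \<in> set (ritmo s1)" "coloured_walk k s1 = coloured_walk k s @ [(pi, c)]"
    using extend[OF Cons.prems(1) n k Cons.prems(2) Cons.prems(3) ein conn] by blast
  have ks1: "k \<le> length s1" using s1(2) Cons.prems(2) by simp
  have l1: "wn k (length s1 - k) s1 = e" using last_cw[OF ks1] s1(4) e by simp
  have "\<exists>s'. s' \<in> Av (decr n) \<and> length s' = length s1 + length w \<and> coloured_walk k s' = coloured_walk k s1 @ w"
  proof (rule Cons.IH[OF s1(1) ks1 s1(3)])
    show "set w \<subseteq> inherited n k" using Cons.prems(4) by simp
    show "\<forall>i. Suc i < length w \<longrightarrow> tgt k (w ! i) = src k (w ! Suc i)"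
    proof (intro allI impI)
      fix i assume "Suc i < length w"
      then show "tgt k (w ! i) = src k (w ! Suc i)" using Cons.prems(5)[rule_format, of "Suc i"] by simp
    qed
    show "w \<noteq> [] \<longrightarrow> tgt k (wn k (length s1 - k) s1) = src k (hd w)"
    proof
      assume "w \<noteq> []"
      then show "tgt k (wn k (length s1 - k) s1) = src k (hd w)"
        using Cons.prems(5)[rule_format, of 0] l1 by (simp add: hd_conv_nth)
    qed
  qed
  then show ?case using s1 e by auto
qed

lemma fin_inh:
  assumes k: "1 \<le> k" and n: "2 \<le> n" shows "finite (inherited n k)"
proof -
  have "inherited n k \<subseteq> {xs. set xs \<subseteq> {0..k} \<and> length xs = k} \<times> {xs. set xs \<subseteq> {0..<n} \<and> length xs = k}"
  proof
    fix e assume e: "e \<in> inherited n k"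
    obtain pi c where pc: "e = (pi, c)" by (cases e)
    have EP: "is_perm pi \<and> length pi = k \<and> length c = k \<and> (\<forall>q<k. 1 \<le> c!q \<and> c!q < n)"
      using edge_props[of pi c n k] e pc k n by blast
    then have "set pi \<subseteq> {0..k}" unfolding is_perm_def by auto
    moreover have "set c \<subseteq> {0..<n}"
    proof
      fix x assume "x \<in> set c"
      then obtain q where "q < length c" "x = c!q" by (metis in_set_conv_nth)
      then show "x \<in> {0..<n}" using EP by simp
    qed
    ultimately show "e \<in> {xs. set xs \<subseteq> {0..k} \<and> length xs = k} \<times> {xs. set xs \<subseteq> {0..<n} \<and> length xs = k}"
      using EP pc by simp
  qed
  moreover have "finite ({xs. set xs \<subseteq> {0..k} \<and> length xs = k} \<times> {xs. set xs \<subseteq> {0..<n} \<and> length xs = (k::nat)})"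
    by (intro finite_cartesian_product finite_lists_length_eq) simp_all
  ultimately show ?thesis by (rule finite_subset)
qed



theorem mainTheorem11:
  fixes n k :: nat
  assumes "n \<ge> 2" and "k \<ge> 1"
  shows "\<exists>C::nat. \<forall>w. is_walk k n w \<and> w \<noteq> [] \<longrightarrow>
           (\<exists>w' \<sigma>. is_walk k n w' \<and> length w' \<le> C \<and> concat_defined k w' w \<and>
              \<sigma> \<in> Av (decr n) \<and> length \<sigma> = length w + k - 1 + length w' \<and>
              coloured_walk k \<sigma> = w' @ w)"
proof -
  have n: "2 \<le> n" and k: "1 \<le> k" using assms by simp_all
  define R where "R = (\<lambda>e. LEAST L. \<exists>r\<in>Av (decr n). k \<le> length r \<and> en k (S r) = e \<and> length r = L)"
  define C where "C = n + Max (R ` inherited n k)"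
  have fin: "finite (inherited n k)" using fin_inh[OF k n] .
  show ?thesis
  proof (intro exI[of _ C] allI impI)
    fix w assume wa: "is_walk k n w \<and> w \<noteq> []"
    have ws: "set w \<subseteq> inherited n k" and wc: "\<forall>i. Suc i < length w \<longrightarrow> tgt k (w ! i) = src k (w ! Suc i)"
      using wa unfolding is_walk_def ov_edges_def by auto
    have wne: "w \<noteq> []" using wa by simp
    define e1 where "e1 = hd w"
    have e1in: "e1 \<in> inherited n k" using ws wne unfolding e1_def by auto
    then have "\<exists>L. \<exists>r\<in>Av (decr n). k \<le> length r \<and> en k (S r) = e1 \<and> length r = L"
      unfolding inherited_def by auto
    then have "\<exists>r\<in>Av (decr n). k \<le> length r \<and> en k (S r) = e1 \<and> length r = R e1"
      unfolding R_def by (rule LeastI_ex)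
    then obtain r where r: "r \<in> Av (decr n)" "k \<le> length r" "en k (S r) = e1" "length r = R e1"
      by blast
    have RC: "R e1 \<le> Max (R ` inherited n k)" using fin e1in by simp
    obtain s0 where s0: "s0 \<in> Av (decr n)" "length s0 = n - 2 + length r" "k \<le> length s0"
      "\<forall>x. 1 \<le> x \<and> x \<le> n - 2 \<longrightarrow> x \<in> set (ritmo s0)" "wn k (length s0 - k) s0 = en k (S r)"
      using initial[OF r(1) r(2) k n] by blast
    define w' where "w' = butlast (coloured_walk k s0)"
    have cwne: "coloured_walk k s0 \<noteq> []" using length_cw[OF s0(3)] by auto
    have lastcw: "last (coloured_walk k s0) = e1" using last_cw[OF s0(3)] s0(5) r(3) by simp
    have cwdec: "coloured_walk k s0 = w' @ [e1]" unfolding w'_def using cwne lastcw by (metis append_butlast_last_id)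
    have lw': "length w' = length s0 - k" using arg_cong[OF cwdec, of length] length_cw[OF s0(3)] by simp
    have cww: "is_walk k n (coloured_walk k s0)" using cw_walk[OF s0(1) k s0(3) n] .
    have w'walk: "is_walk k n w'"
    proof -
      have "set w' \<subseteq> ov_edges k n" using cww cwdec unfolding is_walk_def by auto
      moreover have "\<forall>i. Suc i < length w' \<longrightarrow> tgt k (w' ! i) = src k (w' ! Suc i)"
      proof (intro allI impI)
        fix i assume i: "Suc i < length w'"
        have "tgt k (coloured_walk k s0 ! i) = src k (coloured_walk k s0 ! Suc i)"
          using cww i cwdec unfolding is_walk_def by simp
        then show "tgt k (w' ! i) = src k (w' ! Suc i)" using i cwdec by (simp add: nth_append)
      qed
      ultimately show ?thesis unfolding is_walk_def by simp
    qed
    have cd: "concat_defined k w' w"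
    proof (cases "w' = []")
      case False
      define j where "j = length w' - 1"
      have j: "Suc j < length (coloured_walk k s0)" "Suc j = length w'" using False cwdec unfolding j_def by simp_all
      have "tgt k (coloured_walk k s0 ! j) = src k (coloured_walk k s0 ! Suc j)"
        using cww j(1) unfolding is_walk_def by simp
      moreover have "coloured_walk k s0 ! j = last w'" using cwdec j False unfolding j_def by (simp add: nth_append last_conv_nth)
      moreover have "coloured_walk k s0 ! Suc j = hd w" using cwdec j unfolding e1_def by simp
      ultimately show ?thesis unfolding concat_defined_def using wne by simp
    qed (simp add: concat_defined_def)
    obtain s' where s': "s' \<in> Av (decr n)" "length s' = length s0 + length (tl w)"
      "coloured_walk k s' = coloured_walk k s0 @ tl w"
    proof -
      have "\<exists>s'. s' \<in> Av (decr n) \<and> length s' = length s0 + length (tl w) \<and> coloured_walk k s' = coloured_walk k s0 @ tl w"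
      proof (rule iterate[OF n k s0(1) s0(3) s0(4)])
        show "set (tl w) \<subseteq> inherited n k" using ws by (meson list.set_sel(2) subset_iff wne)
        show "\<forall>i. Suc i < length (tl w) \<longrightarrow> tgt k (tl w ! i) = src k (tl w ! Suc i)"
        proof (intro allI impI)
          fix i assume "Suc i < length (tl w)"
          then show "tgt k (tl w ! i) = src k (tl w ! Suc i)" using wc[rule_format, of "Suc i"] wne
            by (simp add: nth_tl)
        qed
        show "tl w \<noteq> [] \<longrightarrow> tgt k (wn k (length s0 - k) s0) = src k (hd (tl w))"
        proof
          assume tne: "tl w \<noteq> []"
          then have "Suc 0 < length w" using wne by (cases w) auto
          then have "tgt k (w ! 0) = src k (w ! 1)" using wc by simp
          moreover have "hd (tl w) = w ! 1" using tne by (cases w) (auto simp: hd_conv_nth)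
          ultimately show "tgt k (wn k (length s0 - k) s0) = src k (hd (tl w))"
            using s0(5) r(3) wne unfolding e1_def by (simp add: hd_conv_nth)
        qed
      qed
      then show ?thesis using that by blast
    qed
    have "coloured_walk k s' = w' @ w" using s'(3) cwdec wne unfolding e1_def by simp
    moreover have "length s' = length w + k - 1 + length w'"
      using s'(2) lw' s0(3) wne by (cases w) auto
    moreover have "length w' \<le> C" using lw' s0(2) r(4) RC unfolding C_def by simp
    ultimately show "\<exists>w' \<sigma>. is_walk k n w' \<and> length w' \<le> C \<and> concat_defined k w' w \<and>
              \<sigma> \<in> Av (decr n) \<and> length \<sigma> = length w + k - 1 + length w' \<and>
              coloured_walk k \<sigma> = w' @ w"
      using w'walk cd s'(1) by blast
  qed
qed


end
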